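(* Fix parameters $\tau\in(0,1/100)$ and $M\ge2$, and let $\theta=2+\tau$. Let $G$ be a non-trivial and structured GCD graph with set of primes $\mathcal{P}$ such that \[ \mathcal{R}(G)\subseteq\{p> C_6\} \quad\text{and}\quad \mathcal{R}_-(G)\neq\emptyset. \] Then there is a numerator-exact GCD subgraph $G'$ of $G$ with multiplicative data $(\mathcal{P}',f',g')$ such that: (a) $G'$ is non-trivial and maximal; (b) $\mathcal{P}\subsetneq\mathcal{P}'\subseteq \mathcal{P}\cup \mathcal{R}_-(G)$, $\mathcal{R}_-(G')\subsetneq \mathcal{R}_-(G)$, and $\mathcal{R}_+(G')\subseteq \mathcal{R}_+(G)$; (c) $f'(p)\le 0$ and $g'(p)\le 0$ for all $p\in\mathcal{P}'\setminus\mathcal{P}$; (d) $q(G')\geqslant q(G)\prod_{p\in\mathcal{P}'\setminus\mathcal{P}} (1-\mathbbm{1}_{f'(p)=g'(p)<0}/p)^2 (1-1/p^{1+\frac{\tau}{4}})$.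
   Context: For a prime $p$, $k\in\mathbb{Z}$ and $\rho\in\mathbb{Q}_{>0}$, write $\operatorname{e}_p(\rho)=k$ if $\rho=p^ka/q$ with $a,q\in\mathbb{N}$, $p\nmid aq$. For real $t$, $t^+=\max\{t,0\}$, $t^-=\max\{-t,0\}$. Weighted bipartite graph: $(\mu,\mathcal{V},\mathcal{W},\mathcal{E})$ with $\mu:\mathbb{R}_{>0}\to\mathbb{R}_{>0}$, $\mathcal{V},\mathcal{W}$ finite sets of positive reals, $\mathcal{E}\subseteq\mathcal{V}\times\mathcal{W}$; $\mu(\mathcal{T})=\sum_{t\in\mathcal{T}}\mu(t)$, $\mu(\mathcal{E})=\sum_{(v,w)\in\mathcal{E}}\mu(v)\mu(w)$; edge density $\delta=\mu(\mathcal{E})/(\mu(\mathcal{V})\mu(\mathcal{W}))$ if $\mathcal{E}\neq\emptyset$, else $0$; $\mu^{(\theta)}=\delta^\theta\mu(\mathcal{V})\mu(\mathcal{W})$. A subgraph has $\mathcal{V}'\subseteq\mathcal{V}$, $\mathcal{W}'\subseteq\mathcal{W}$, $\mathcal{E}'\subseteq\mathcal{E}\cap(\mathcal{V}'\times\mathcal{W}')$, same $\mu$. "Maximal" means $\mu^{(\theta)}(G)\ge\mu^{(\theta)}(G')$ for every subgraph $G'$ (with $\theta=2+\tau$). GCD graph: a septuple $G=(\mu,\mathcal{V},\mathcal{W},\mathcal{E},\mathcal{P},f,g)$ where $(\mu,\mathcal{V},\mathcal{W},\mathcal{E})$ is a weighted bipartite graph with $\mathcal{V},\mathcal{W}\subset\mathbb{Q}_{>0}$,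 $\mathcal{P}$ is a set of primes (its "set of primes"; $(\mathcal{P},f,g)$ is its "multiplicative data"), $f,g:\mathcal{P}\to\mathbb{Z}$, and for all $p\in\mathcal{P}$ and all $(a/q,b/r)\in\mathcal{V}\times\mathcal{W}$ with $\gcd(a,q)=\gcd(b,r)=1$: $p^{f^+(p)}\mid a$, $p^{g^+(p)}\mid b$, $p^{f^-(p)}\mid q$, $p^{g^-(p)}\mid r$, and if $(a/q,b/r)\in\mathcal{E}$ then the exact power of $p$ dividing $\gcd(a,b)$ is $p^{\min\{f^+(p),g^+(p)\}}$ and that dividing $\gcd(q,r)$ is $p^{\min\{f^-(p),g^-(p)\}}$. $G$ is non-trivial if $\mathcal{E}\neq\emptyset$. Quality: $q(G)=\mu^{(\theta)}(G)\prod_{p\in\mathcal{P}}p^{|f(p)-g(p)|}$. A GCD subgraph $G'=(\mu,\mathcal{V}',\mathcal{W}',\mathcal{E}',\mathcal{P}',f',g')$ of $G$ has $\mathcal{V}'\subseteq\mathcal{V}$, $\mathcal{W}'\subseteq\mathcal{W}$, $\mathcal{E}'\subseteq\mathcal{E}$, $\mathcal{P}'\supseteq\mathcal{P}$, $f'|_{\mathcal{P}}=f$, $g'|_{\mathcal{P}}=g$. It is numerator-exact if for every $p\in\mathcal{P}'\setminus\mathcal{P}$ and every $(a/q,b/r)\in\mathcal{V}'\times\mathcal{W}'$ with $\gcd(a,q)=\gcd(b,r)=1$, $p^{f'^+(p)}$ exactly divides $a$ and $p^{g'^+(p)}$ exactly divides $b$. $\mathcal{R}(G)$ is the set of primes $p\notin\mathcal{P}$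 for which there is $(a/q,b/r)\in\mathcal{E}$ with $\gcd(a,q)=\gcd(b,r)=1$ and $p\mid\gcd(a,b)\gcd(q,r)$. $G$ is structured if for each $p\in\mathcal{R}(G)$ there is $k_p\in\mathbb{Z}$ with $(\operatorname{e}_p(v)-k_p,\operatorname{e}_p(w)-k_p)\in\{(-1,0),(0,-1),(0,0),(0,1),(1,0)\}$ for all $(v,w)\in\mathcal{E}$. For structured $G$, $\mathcal{R}_+(G)$ is the set of $p\in\mathcal{R}(G)$ with $\operatorname{e}_p(v)\ge0$ and $\operatorname{e}_p(w)\ge0$ for all $(v,w)\in\mathcal{E}$, and $\mathcal{R}_-(G)$ is the set of $p\in\mathcal{R}(G)$ with $\operatorname{e}_p(v)\le0$ and $\operatorname{e}_p(w)\le0$ for all $(v,w)\in\mathcal{E}$. Constants: $C_1=10^4/\tau$, $C_2=10MC_1^3$, $C_4=10^{10}M^2C_2^2$, $C_6=\max\{C_4,10^4MC_2,C_2^{10/\tau}\}$. *)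

theory Defs
  imports Complex_Main "HOL-Computational_Algebra.Primes"
begin

text \<open>GCD graphs. Vertices are positive rationals; \<mu> is a weight function on the reals
  (only its values at the vertices matter). The multiplicative data are \<P>, f, g.\<close>

record gcd_graph =
  gmu :: "real \<Rightarrow> real"
  gV  :: "rat set"
  gW  :: "rat set"
  gE  :: "(rat \<times> rat) set"
  gP  :: "nat set"
  gf  :: "nat \<Rightarrow> int"
  gg  :: "nat \<Rightarrow> int"

definition rnum :: "rat \<Rightarrow> int" where "rnum r = fst (quotient_of r)"
definition rden :: "rat \<Rightarrow> int" where "rden r = snd (quotient_of r)"

definition ep :: "nat \<Rightarrow> rat \<Rightarrow> int" where
  "ep p r = int (multiplicity (int p) (rnum r)) - int (multiplicity (int p) (rden r))"

definition pos_part :: "int \<Rightarrow> nat" where "pos_part t = nat (max t 0)"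
definition neg_part :: "int \<Rightarrow> nat" where "neg_part t = nat (max (- t) 0)"

definition wsum :: "(real \<Rightarrow> real) \<Rightarrow> rat set \<Rightarrow> real" where
  "wsum \<mu> T = (\<Sum>t\<in>T. \<mu> (of_rat t))"

definition esum :: "(real \<Rightarrow> real) \<Rightarrow> (rat \<times> rat) set \<Rightarrow> real" where
  "esum \<mu> E = (\<Sum>(v,w)\<in>E. \<mu> (of_rat v) * \<mu> (of_rat w))"

definition density :: "(real \<Rightarrow> real) \<Rightarrow> rat set \<Rightarrow> rat set \<Rightarrow> (rat \<times> rat) set \<Rightarrow> real" where
  "density \<mu> V W E = (if E \<noteq> {} then esum \<mu> E / (wsum \<mu> V * wsum \<mu> W) else 0)"

definition mu_theta :: "real \<Rightarrow> (real \<Rightarrow> real) \<Rightarrow> rat set \<Rightarrow> rat set \<Rightarrow> (rat \<times> rat) set \<Rightarrow> real" where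
  "mu_theta \<theta> \<mu> V W E = density \<mu> V W E powr \<theta> * wsum \<mu> V * wsum \<mu> W"

definition is_wbg :: "(real \<Rightarrow> real) \<Rightarrow> rat set \<Rightarrow> rat set \<Rightarrow> (rat \<times> rat) set \<Rightarrow> bool" where
  "is_wbg \<mu> V W E \<longleftrightarrow> (\<forall>x>0. \<mu> x > 0) \<and> finite V \<and> finite W \<and>
     (\<forall>v\<in>V. v > 0) \<and> (\<forall>w\<in>W. w > 0) \<and> E \<subseteq> V \<times> W"

definition maximal :: "real \<Rightarrow> gcd_graph \<Rightarrow> bool" where
  "maximal \<theta> G \<longleftrightarrow> (\<forall>V' W' E'. V' \<subseteq> gV G \<longrightarrow> W' \<subseteq> gW G \<longrightarrow> E' \<subseteq> gE G \<inter> (V' \<times> W') \<longrightarrow>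
      mu_theta \<theta> (gmu G) (gV G) (gW G) (gE G) \<ge> mu_theta \<theta> (gmu G) V' W' E')"

definition is_gcd_graph :: "gcd_graph \<Rightarrow> bool" where
  "is_gcd_graph G \<longleftrightarrow> is_wbg (gmu G) (gV G) (gW G) (gE G) \<and>
     finite (gP G) \<and> (\<forall>p\<in>gP G. prime p) \<and>
     (\<forall>p\<in>gP G. \<forall>v\<in>gV G. \<forall>w\<in>gW G.
        (int p) ^ pos_part (gf G p) dvd rnum v \<and>
        (int p) ^ pos_part (gg G p) dvd rnum w \<and>
        (int p) ^ neg_part (gf G p) dvd rden v \<and>
        (int p) ^ neg_part (gg G p) dvd rden w \<and>
        ((v, w) \<in> gE G \<longrightarrow>
           multiplicity (int p) (gcd (rnum v) (rnum w)) = min (pos_part (gf G p)) (pos_part (gg G p)) \<and>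
           multiplicity (int p) (gcd (rden v) (rden w)) = min (neg_part (gf G p)) (neg_part (gg G p))))"

definition nontrivial :: "gcd_graph \<Rightarrow> bool" where
  "nontrivial G \<longleftrightarrow> gE G \<noteq> {}"

definition quality :: "real \<Rightarrow> gcd_graph \<Rightarrow> real" where
  "quality \<theta> G = mu_theta \<theta> (gmu G) (gV G) (gW G) (gE G) *
     (\<Prod>p\<in>gP G. real p ^ nat \<bar>gf G p - gg G p\<bar>)"

definition gcd_subgraph :: "gcd_graph \<Rightarrow> gcd_graph \<Rightarrow> bool" where
  "gcd_subgraph G' G \<longleftrightarrow> is_gcd_graph G' \<and> gmu G' = gmu G \<and>
     gV G' \<subseteq> gV G \<and> gW G' \<subseteq> gW G \<and> gE G' \<subseteq> gE G \<and> gP G \<subseteq> gP G' \<and>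
     (\<forall>p\<in>gP G. gf G' p = gf G p \<and> gg G' p = gg G p)"

definition numerator_exact :: "gcd_graph \<Rightarrow> gcd_graph \<Rightarrow> bool" where
  "numerator_exact G' G \<longleftrightarrow> gcd_subgraph G' G \<and>
     (\<forall>p\<in>gP G' - gP G.
        (\<forall>v\<in>gV G'. multiplicity (int p) (rnum v) = pos_part (gf G' p)) \<and>
        (\<forall>w\<in>gW G'. multiplicity (int p) (rnum w) = pos_part (gg G' p)))"

definition RG :: "gcd_graph \<Rightarrow> nat set" where
  "RG G = {p. prime p \<and> p \<notin> gP G \<and>
     (\<exists>(v,w)\<in>gE G. int p dvd gcd (rnum v) (rnum w) * gcd (rden v) (rden w))}"

definition structured :: "gcd_graph \<Rightarrow> bool" where
  "structured G \<longleftrightarrow> (\<forall>p\<in>RG G. \<exists>k::int. \<forall>(v,w)\<in>gE G.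
     (ep p v - k, ep p w - k) \<in> {(-1,0), (0,-1), (0,0), (0,1), (1,0)})"

definition RGplus :: "gcd_graph \<Rightarrow> nat set" where
  "RGplus G = {p\<in>RG G. \<forall>(v,w)\<in>gE G. ep p v \<ge> 0 \<and> ep p w \<ge> 0}"

definition RGminus :: "gcd_graph \<Rightarrow> nat set" where
  "RGminus G = {p\<in>RG G. \<forall>(v,w)\<in>gE G. ep p v \<le> 0 \<and> ep p w \<le> 0}"

definition C1 :: "real \<Rightarrow> real" where "C1 \<tau> = 10^4 / \<tau>"
definition C2 :: "real \<Rightarrow> real \<Rightarrow> real" where "C2 \<tau> M = 10 * M * (C1 \<tau>)^3"
definition C4 :: "real \<Rightarrow> real \<Rightarrow> real" where "C4 \<tau> M = 10^10 * M^2 * (C2 \<tau> M)^2"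
definition C6 :: "real \<Rightarrow> real \<Rightarrow> real" where
  "C6 \<tau> M = max (C4 \<tau> M) (max (10^4 * M * C2 \<tau> M) (C2 \<tau> M powr (10 / \<tau>)))"

end

theory Submission
  imports Defs "HOL-Analysis.Analysis"
begin

lemma bern_up:
  fixes \<theta> x :: real
  assumes "1 \<le> \<theta>" "0 \<le> x" "x \<le> 1"
  shows "1 - \<theta> * x \<le> (1 - x) powr \<theta>"
proof (cases "x = 1")
  case True
  then show ?thesis using assms by simp
next
  case False
  hence x1: "0 < 1 - x" using assms by simp
  have "((1-x) powr \<theta>) powr (1/\<theta>) * 1 powr (1 - 1/\<theta>) \<le> (1/\<theta>) * (1-x) powr \<theta> + (1-1/\<theta>) * 1"
    by (rule Youngs_inequality_0) (use assms x1 in auto)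
  moreover have "((1-x) powr \<theta>) powr (1/\<theta>) = 1 - x"
    using x1 assms by (simp add: powr_powr)
  ultimately have "1 - x \<le> (1/\<theta>) * (1-x) powr \<theta> + (1-1/\<theta>)" by simp
  hence "\<theta> * (1 - x) \<le> \<theta> * ((1/\<theta>) * (1-x) powr \<theta> + (1-1/\<theta>))"
    using assms by (intro mult_left_mono) auto
  also have "\<dots> = (1-x) powr \<theta> + (\<theta> - 1)"
    using assms by (simp add: algebra_simps)
  finally have "\<theta> * (1 - x) \<le> (1-x) powr \<theta> + (\<theta> - 1)" .
  then show ?thesis by (simp add: algebra_simps)
qed

lemma bern_down:
  fixes \<tau> s :: real
  assumes "0 \<le> \<tau>" "\<tau> \<le> 1" "0 \<le> s" "s \<le> 1"
  shows "(1 - s) powr \<tau> \<le> 1 - \<tau> * s"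
proof (cases "s = 1")
  case True
  then show ?thesis using assms by simp
next
  case False
  hence s1: "0 < 1 - s" using assms by simp
  have "(1-s) powr \<tau> * 1 powr (1 - \<tau>) \<le> \<tau> * (1-s) + (1-\<tau>) * 1"
    by (rule Youngs_inequality_0) (use assms s1 in auto)
  then show ?thesis by (simp add: algebra_simps)
qed

lemma pow_beta_le:
  fixes \<tau> s :: real
  assumes "0 \<le> \<tau>" "\<tau> \<le> 1" "0 \<le> s" "s \<le> 1"
  shows "(1 - s) powr (1 + \<tau>) \<le> (1 - s) * (1 - \<tau> * s)"
proof -
  have "(1 - s) powr (1 + \<tau>) = (1 - s) * (1 - s) powr \<tau>"
    using assms by (simp add: powr_add)
  also have "\<dots> \<le> (1 - s) * (1 - \<tau> * s)"
    using assms bern_down[OF assms] by (intro mult_left_mono) auto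
  finally show ?thesis .
qed

lemma amgm_step:
  fixes P t \<theta> :: real
  assumes "P > 0" "0 \<le> t" "\<theta> > 1"
  shows "\<theta> * (P powr (-1/\<theta>) * t powr (1 - 1/\<theta>)) \<le> (\<theta> - 1) * t + 1/P"
proof (cases "t = 0")
  case True
  then show ?thesis using assms by simp
next
  case False
  hence t0: "t > 0" using assms by simp
  have "t powr (1 - 1/\<theta>) * (1/P) powr (1/\<theta>) \<le> (1 - 1/\<theta>) * t + (1/\<theta>) * (1/P)"
    by (rule Youngs_inequality_0) (use assms t0 in auto)
  moreover have "(1/P) powr (1/\<theta>) = P powr (-1/\<theta>)"
    using assms by (simp add: powr_divide powr_minus_divide)
  ultimately have "P powr (-1/\<theta>) * t powr (1 - 1/\<theta>) \<le> (1 - 1/\<theta>) * t + (1/\<theta>) * (1/P)"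
    by (simp add: mult.commute)
  hence "\<theta> * (P powr (-1/\<theta>) * t powr (1 - 1/\<theta>)) \<le> \<theta> * ((1 - 1/\<theta>) * t + (1/\<theta>) * (1/P))"
    using assms by simp
  also have "\<dots> = (\<theta> - 1) * t + 1/P" using assms by (simp add: field_simps)
  finally show ?thesis .
qed

lemma large_step:
  fixes P t \<theta> \<sigma> :: real
  assumes "P > 0" "0 < \<sigma>" "\<sigma> \<le> t" "\<theta> > 1"
  shows "\<theta> * (P powr (-1/\<theta>) * t powr (1 - 1/\<theta>)) \<le> (\<theta> * (P * \<sigma>) powr (-1/\<theta>)) * t"
proof -
  have t0: "t > 0" using assms by simp
  have "t powr (1 - 1/\<theta>) = t * t powr (-1/\<theta>)"
    using t0 by (simp add: powr_diff powr_minus_divide)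
  moreover have "t powr (-1/\<theta>) \<le> \<sigma> powr (-1/\<theta>)"
    by (rule powr_mono2') (use assms in auto)
  ultimately have "t powr (1 - 1/\<theta>) \<le> t * \<sigma> powr (-1/\<theta>)"
    using t0 by (simp add: mult_left_mono)
  hence "\<theta> * (P powr (-1/\<theta>) * t powr (1 - 1/\<theta>)) \<le> \<theta> * (P powr (-1/\<theta>) * (t * \<sigma> powr (-1/\<theta>)))"
    using assms by (intro mult_left_mono) auto
  also have "\<dots> = (\<theta> * (P * \<sigma>) powr (-1/\<theta>)) * t"
    using assms by (simp add: powr_mult)
  finally show ?thesis .
qed

lemma consts_r:
  fixes \<tau> P :: real
  assumes "0 < \<tau>" "\<tau> < 1/100" "P \<ge> 10^20"
  shows "0 < 1 / P powr (1+\<tau>/4)" "1 / P powr (1+\<tau>/4) \<le> 1/P"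
    "10^7 * (1/P)^2 \<le> 1 / P powr (1+\<tau>/4)"
proof -
  have P1: "P \<ge> 1" using assms by simp
  show "0 < 1 / P powr (1+\<tau>/4)" using P1 by simp
  have "P powr 1 \<le> P powr (1+\<tau>/4)" using P1 assms by (intro powr_mono) auto
  hence "P \<le> P powr (1+\<tau>/4)" using P1 by simp
  thus "1 / P powr (1+\<tau>/4) \<le> 1/P" using P1 by (simp add: frac_le)
  have a: "P powr (1+\<tau>/4) \<le> P powr (3/2)" using P1 assms by (intro powr_mono) auto
  have b: "P powr (3/2) = P * sqrt P"
  proof -
    have e: "P powr (1 + 1/2) = P powr 1 * P powr (1/2)" by (rule powr_add)
    have "(1::real) + 1/2 = 3/2" by simp
    with e have "P powr (3/2) = P powr 1 * P powr (1/2)" by metis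
    thus ?thesis using P1 by (simp add: powr_half_sqrt)
  qed
  have c: "sqrt P \<ge> 10^10" by (rule real_le_rsqrt) (use assms in simp)
  define Q where "Q = P powr (1+\<tau>/4)"
  have Qpos: "Q > 0" using P1 by (simp add: Q_def)
  have "10^7 * (1/P)^2 * Q \<le> 10^7 * (1/P)^2 * (P * sqrt P)"
    using a b P1 unfolding Q_def by (intro mult_left_mono) auto
  also have "\<dots> = 10^7 * sqrt P / P" using P1 by (simp add: power2_eq_square)
  also have "\<dots> \<le> 1"
  proof -
    have sq: "sqrt P * sqrt P = P" using P1 by simp
    have "10^10 * sqrt P \<le> sqrt P * sqrt P"
      using c P1 by (intro mult_right_mono) auto
    hence "10^7 * sqrt P \<le> P" using sq by simp
    thus ?thesis using P1 by (simp add: divide_le_eq)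
  qed
  finally have X: "10^7 * (1/P)^2 * Q \<le> 1" .
  show "10^7 * (1/P)^2 \<le> 1 / P powr (1+\<tau>/4)"
    unfolding Q_def[symmetric] by (simp only: pos_le_divide_eq[OF Qpos] X)
qed

lemma eta_bound:
  fixes \<tau> K :: real
  assumes "0 < \<tau>" "\<tau> < 1/100" "K \<ge> 729"
  shows "(2+\<tau>) * K powr (-1/(2+\<tau>)) \<le> 1/4"
proof -
  define \<theta> where "\<theta> = 2+\<tau>"
  have th: "2 < \<theta>" "\<theta> < 3" using assms by (auto simp: \<theta>_def)
  have "(729::real) powr (1/3) \<le> 729 powr (1/\<theta>)"
    using th by (intro powr_mono) (auto simp: field_simps)
  also have "\<dots> \<le> K powr (1/\<theta>)" using assms th by (intro powr_mono2) auto
  finally have k9: "(729::real) powr (1/3) \<le> K powr (1/\<theta>)" .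
  have "(729::real) powr (1/3) = ((9::real) powr 3) powr (1/3)" by simp
  also have "\<dots> = 9" by (simp add: powr_powr)
  finally have "9 \<le> K powr (1/\<theta>)" using k9 by simp
  moreover have "K powr (-1/\<theta>) = 1 / K powr (1/\<theta>)"
    by (simp add: powr_minus_divide[symmetric])
  ultimately have "K powr (-1/\<theta>) \<le> 1/9" by (simp add: divide_le_eq)
  hence "\<theta> * K powr (-1/\<theta>) \<le> \<theta> * (1/9)" using th by (intro mult_left_mono) auto
  also have "\<dots> \<le> 1/4" using assms by (simp add: \<theta>_def)
  finally show ?thesis by (simp add: \<theta>_def)
qed

lemma root_step:
  fixes P x t \<theta> :: real
  assumes "P > 0" "0 \<le> x" "0 \<le> t" "\<theta> > 1" "P * x powr \<theta> \<le> t powr (\<theta> - 1)"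
  shows "x \<le> P powr (-1/\<theta>) * t powr (1 - 1/\<theta>)"
proof -
  have "x powr \<theta> \<le> t powr (\<theta> - 1) / P" using assms by (simp add: field_simps)
  hence "(x powr \<theta>) powr (1/\<theta>) \<le> (t powr (\<theta> - 1) / P) powr (1/\<theta>)"
    using assms by (intro powr_mono2) auto
  moreover have "(x powr \<theta>) powr (1/\<theta>) = x" using assms by (simp add: powr_powr)
  moreover have "(t powr (\<theta> - 1) / P) powr (1/\<theta>) = t powr (1 - 1/\<theta>) * P powr (-1/\<theta>)"
  proof -
    have "(t powr (\<theta> - 1) / P) powr (1/\<theta>) = t powr ((\<theta> - 1) * (1/\<theta>)) / P powr (1/\<theta>)"
      by (simp add: powr_divide powr_powr)
    also have "(\<theta> - 1) * (1/\<theta>) = 1 - 1/\<theta>" using assms by (simp add: field_simps)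
    finally show ?thesis by (simp add: powr_minus_divide divide_inverse powr_minus)
  qed
  ultimately show ?thesis by (simp add: mult.commute)
qed

lemma caseA_arith:
  fixes \<beta> \<sigma> w r s t F :: real
  assumes "1 \<le> \<beta>" "\<beta> \<le> 101/100" "0 \<le> \<sigma>" "\<sigma> \<le> 1/100" "0 < w" "w \<le> 1/10^20"
    "\<sigma> * w \<le> r / 12640" "w^2 \<le> r / 10^7" "0 < r" "r \<le> w" "\<sigma>^2 = r/16"
    "0 \<le> s" "s \<le> \<sigma>" "0 \<le> t" "t \<le> \<sigma>" "0 \<le> F" "F \<le> 1"
    "1 - F \<ge> 2*w - w^2 + (1 - 2*w) * r"
    "us * ut \<le> 1 - \<beta>*(s+t) + 2*\<sigma>^2" "0 \<le> us * ut"
  shows "F * (us * ut) \<le> 1 - \<beta>*(s+t) - 2*w"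
proof -
  define Z where "Z = 1 - \<beta>*(s+t)"
  have "\<beta>*(s+t) \<le> \<beta>*(2*\<sigma>)" using assms by (intro mult_left_mono) auto
  hence Zlo: "Z \<ge> 1 - 2*\<beta>*\<sigma>" unfolding Z_def by simp
  have "\<beta>*\<sigma> \<le> (101/100)*(1/100)" using assms by (intro mult_mono) auto
  hence Z0: "1 - 2*\<beta>*\<sigma> \<ge> 0" by simp
  have "F * (us * ut) \<le> F * (Z + 2*\<sigma>^2)" using assms unfolding Z_def by (intro mult_left_mono) auto
  also have "\<dots> = F * Z + F * (2*\<sigma>^2)" by (simp add: algebra_simps)
  also have "\<dots> \<le> F * Z + 2*\<sigma>^2"
    using assms by (simp add: mult_left_le_one_le)
  finally have a: "F * (us * ut) \<le> F * Z + 2*\<sigma>^2" .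
  have "(1 - 2*\<beta>*\<sigma>) * (2*w - w^2 + (1 - 2*w) * r) \<le> (1 - 2*\<beta>*\<sigma>) * (1 - F)"
    using assms Z0 by (intro mult_left_mono) auto
  also have "\<dots> \<le> Z * (1 - F)" using Zlo assms by (intro mult_right_mono) auto
  finally have b: "(1 - 2*\<beta>*\<sigma>) * (2*w - w^2 + (1 - 2*w) * r) \<le> Z * (1 - F)" .
  have "\<beta>*(\<sigma>*w) \<le> 2*(\<sigma>*w)" using assms by (intro mult_right_mono) auto
  hence e1: "\<beta>*\<sigma>*w \<le> 2 * (r/12640)" using assms by (simp add: mult.assoc)
  have "\<beta>*\<sigma> \<le> 2*(1/100)" using assms by (intro mult_mono) auto
  hence "(\<beta>*\<sigma>)*r \<le> (2*(1/100))*r" using assms by (intro mult_right_mono) auto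
  hence e2: "\<beta>*\<sigma>*r \<le> 2 * (r/100)" by simp
  have e3: "\<beta>*\<sigma>*w^2 \<ge> 0" using assms by simp
  have e4: "\<beta>*\<sigma>*w*r \<ge> 0" using assms by simp
  have "w * r \<le> (1/10^20) * r" using assms by (intro mult_right_mono) auto
  hence e5: "w * r \<le> r / 1000" using assms by simp
  have e6: "w^2 \<le> r / 1000" using assms by simp
  have c: "(1 - 2*\<beta>*\<sigma>) * (2*w - w^2 + (1 - 2*w) * r) \<ge> 2*w + r/8"
  proof -
    have "(1 - 2*\<beta>*\<sigma>) * (2*w - w^2 + (1 - 2*w) * r)
        = 2*w - w^2 + r - 2*(w*r) - 4*(\<beta>*\<sigma>*w) + 2*(\<beta>*\<sigma>*w^2) - 2*(\<beta>*\<sigma>*r) + 4*(\<beta>*\<sigma>*w*r)"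
      by (simp add: algebra_simps power2_eq_square)
    thus ?thesis using e1 e2 e3 e4 e5 e6 \<open>0 < r\<close> by linarith
  qed
  show ?thesis using a b c assms unfolding Z_def by (simp add: algebra_simps)
qed

lemma prod_bound_A:
  fixes \<tau> \<sigma> s t :: real
  assumes "0 \<le> \<tau>" "\<tau> \<le> 1/100" "0 \<le> \<sigma>" "\<sigma> \<le> 1/100"
    "0 \<le> s" "s \<le> \<sigma>" "0 \<le> t" "t \<le> \<sigma>"
  shows "((1 - s) * (1 - \<tau> * s)) * ((1 - t) * (1 - \<tau> * t)) \<le> 1 - (1+\<tau>) * (s+t) + 2*\<sigma>^2"
proof -
  define \<beta> where "\<beta> = 1+\<tau>"
  define u where "u = (1-s) * (1- \<tau> * s)"
  define v where "v = (1-t) * (1- \<tau> * t)"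
  have ts: "\<tau> * s \<le> 1" "\<tau> * t \<le> 1" using assms by (auto intro: mult_le_one)
  have u0: "0 \<le> u" "u \<le> 1" unfolding u_def using assms ts by (auto intro: mult_le_one)
  have v0: "0 \<le> v" "v \<le> 1" unfolding v_def using assms ts by (auto intro: mult_le_one)
  have ue: "u = (1 - \<beta> * s) + \<tau> * s^2" unfolding u_def \<beta>_def by (simp add: algebra_simps power2_eq_square)
  have ve: "v = (1 - \<beta> * t) + \<tau> * t^2" unfolding v_def \<beta>_def by (simp add: algebra_simps power2_eq_square)
  have bs: "\<beta> * s \<le> 1" "\<beta> * t \<le> 1" "0 \<le> \<beta> * s" "0 \<le> \<beta> * t"
  proof -
    have "\<beta> * s \<le> (101/100) * (1/100)" using assms unfolding \<beta>_def by (intro mult_mono) auto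
    thus "\<beta> * s \<le> 1" by simp
    have "\<beta> * t \<le> (101/100) * (1/100)" using assms unfolding \<beta>_def by (intro mult_mono) auto
    thus "\<beta> * t \<le> 1" by simp
    show "0 \<le> \<beta> * s" "0 \<le> \<beta> * t" using assms unfolding \<beta>_def by auto
  qed
  have "u * v = (1 - \<beta> * s) * v + (\<tau> * s^2) * v" by (simp add: ue algebra_simps)
  also have "(\<tau> * s^2) * v \<le> \<tau> * s^2" using v0 assms by (simp add: mult_left_le)
  also have "(1 - \<beta> * s) * v = (1 - \<beta> * s) * (1 - \<beta> * t) + (1 - \<beta> * s) * (\<tau> * t^2)"
    by (simp add: ve algebra_simps)
  also have "(1 - \<beta> * s) * (\<tau> * t^2) \<le> \<tau> * t^2"
    using bs assms by (simp add: mult_left_le_one_le)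
  also have "(1 - \<beta> * s) * (1 - \<beta> * t) = 1 - \<beta> * (s+t) + (\<beta> * s) * (\<beta> * t)" by (simp add: algebra_simps)
  also have "(\<beta> * s) * (\<beta> * t) \<le> ((101/100)*\<sigma>) * ((101/100)*\<sigma>)"
    using assms unfolding \<beta>_def by (intro mult_mono) auto
  also have "\<tau> * s^2 \<le> (1/100)*\<sigma>^2" using assms by (intro mult_mono power_mono) auto
  also have "\<tau> * t^2 \<le> (1/100)*\<sigma>^2" using assms by (intro mult_mono power_mono) auto
  finally have "u * v \<le> 1 - \<beta> * (s+t) + ((101/100)*\<sigma>) * ((101/100)*\<sigma>) + (1/100)*\<sigma>^2 + (1/100)*\<sigma>^2"
    by simp
  also have "\<dots> \<le> 1 - \<beta> * (s+t) + 2*\<sigma>^2" by (simp add: power2_eq_square algebra_simps)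
  finally show ?thesis unfolding u_def v_def \<beta>_def .
qed

lemma caseB_arith:
  fixes \<tau> \<sigma> s t w \<eta> F Ds Dt us :: real
  assumes "0 \<le> \<tau>" "\<tau> \<le> 1/100" "0 < \<sigma>" "\<sigma> \<le> 1/100" "0 < w" "790 * w \<le> \<sigma>"
    "0 \<le> \<eta>" "\<eta> \<le> 1/4" "\<sigma> < s" "s \<le> 1" "0 \<le> t" "t \<le> \<sigma>" "0 \<le> F" "F \<le> 1"
    "Ds \<le> \<eta> * s" "Dt \<le> (1 + \<tau>) * t + w" "0 \<le> us" "us \<le> 1 - s"
  shows "F * (us * ((1 - t) * (1 - \<tau> * t))) \<le> 1 - Dt - Ds"
proof -
  define ut where "ut = (1 - t) * (1 - \<tau> * t)"
  have ute: "ut = 1 - (1 + \<tau>) * t + \<tau> * t^2" unfolding ut_def by (simp add: algebra_simps power2_eq_square)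
  have bt: "(1 + \<tau>) * t \<le> (101/100) * (1/100)" using assms by (intro mult_mono) auto
  have tt: "\<tau> * t^2 \<le> (1/100) * \<sigma>^2" using assms by (intro mult_mono power_mono) auto
  have tt0: "0 \<le> \<tau> * t^2" using assms by simp
  have s2: "\<sigma>^2 \<le> \<sigma> * (1/100)" using assms by (simp add: power2_eq_square mult_left_mono)
  have ut_lo: "ut \<ge> 98/100" using ute bt tt0 by simp
  have ut0: "ut \<ge> 0" using ut_lo by simp
  have "F * (us * ut) \<le> us * ut" using assms ut0 by (simp add: mult_left_le_one_le)
  also have "\<dots> \<le> (1 - s) * ut" using assms ut0 by (intro mult_right_mono) auto
  also have "\<dots> = ut - s * ut" by (simp add: algebra_simps)
  also have "s * ut \<ge> s * (98/100)" using ut_lo assms by (intro mult_left_mono) auto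
  hence "ut - s * ut \<le> ut - s * (98/100)" by simp
  also have "\<dots> \<le> 1 - Dt - Ds"
  proof -
    have "\<eta> * s \<le> (1/4) * s" using assms by (intro mult_right_mono) auto
    thus ?thesis using ute tt s2 assms by linarith
  qed
  finally show ?thesis unfolding ut_def .
qed

lemma core:
  fixes \<tau> P s t x y :: real
  assumes \<tau>0: "0 < \<tau>" and \<tau>1: "\<tau> < 1/100" and P: "P \<ge> 10^20"
    and s: "0 \<le> s" "s \<le> 1" and t: "0 \<le> t" "t \<le> 1"
    and xy: "0 \<le> x" "0 \<le> y" "x + y \<le> 1"
    and hx: "P * x powr (2+\<tau>) \<le> t powr (1+\<tau>)"
    and hy: "P * y powr (2+\<tau>) \<le> s powr (1+\<tau>)"
  shows "(1 - 1/P)^2 * (1 - 1 / P powr (1+\<tau>/4)) * ((1 - s) * (1 - t)) powr (1+\<tau>)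
           \<le> (1 - x - y) powr (2+\<tau>)"
proof -
  define \<theta> where "\<theta> = 2+\<tau>"
  define r where "r = 1 / P powr (1+\<tau>/4)"
  define w where "w = 1/P"
  define \<sigma> where "\<sigma> = sqrt r / 4"
  define \<eta> where "\<eta> = \<theta> * (P * \<sigma>) powr (-1/\<theta>)"
  define F where "F = (1 - 1/P)^2 * (1 - r)"
  define Dt where "Dt = \<theta> * (P powr (-1/\<theta>) * t powr (1 - 1/\<theta>))"
  define Ds where "Ds = \<theta> * (P powr (-1/\<theta>) * s powr (1 - 1/\<theta>))"
  define us where "us = (1 - s) * (1 - \<tau> * s)"
  define ut where "ut = (1 - t) * (1 - \<tau> * t)"
  have P0: "P > 0" using P by simp
  have th: "\<theta> > 1" "\<theta> - 1 = 1 + \<tau>" using \<tau>0 by (auto simp: \<theta>_def)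
  have r0: "0 < r" and rw: "r \<le> w" and rw2: "10^7 * w^2 \<le> r"
    using consts_r[OF \<tau>0 \<tau>1 P] unfolding r_def w_def by auto
  have w0: "0 < w" and wsmall: "w \<le> 1/10^20" using P unfolding w_def by (auto simp: field_simps)
  have sig0: "\<sigma> \<ge> 0" unfolding \<sigma>_def using r0 by simp
  have sig2: "\<sigma>^2 = r/16" unfolding \<sigma>_def using r0 by (simp add: power_divide)
  have "(3162 * w)^2 = 9998244 * w^2" by (simp add: power_mult_distrib)
  moreover have "0 \<le> w^2" by simp
  moreover have "10000000 * w^2 \<le> r" using rw2 by simp
  ultimately have "(3162 * w)^2 \<le> r" by linarith
  hence "3162 * w \<le> sqrt r" by (rule real_le_rsqrt)
  hence sigw: "790 * w \<le> \<sigma>" unfolding \<sigma>_def using w0 by simp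
  have sigpos: "\<sigma> > 0" using sigw w0 by simp
  have sigsmall: "\<sigma> \<le> 1/100"
  proof (rule ccontr)
    assume "\<not> \<sigma> \<le> 1/100"
    hence "(1/100)^2 < \<sigma>^2" by (intro power_strict_mono) auto
    moreover have "(1/100::real)^2 = 1/10000" by (simp add: power2_eq_square)
    ultimately show False using sig2 rw wsmall by simp
  qed
  have sw: "\<sigma> * w \<le> r / 12640"
  proof -
    have "\<sigma> * w \<le> \<sigma> * (\<sigma> / 790)" using sigw sig0 by (intro mult_left_mono) auto
    also have "\<dots> = \<sigma>^2 / 790" by (simp add: power2_eq_square)
    finally show ?thesis using sig2 by simp
  qed
  have Psig: "P * \<sigma> \<ge> 729"
  proof -
    have "P * \<sigma> \<ge> P * (790 * w)" using sigw P0 by (intro mult_left_mono) auto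
    thus ?thesis using P0 unfolding w_def by simp
  qed
  have eta: "\<eta> \<le> 1/4" unfolding \<eta>_def \<theta>_def using eta_bound[OF \<tau>0 \<tau>1 Psig] .
  have eta0: "\<eta> \<ge> 0" unfolding \<eta>_def using th by simp
  have F0: "0 \<le> F" "F \<le> 1"
  proof -
    have a: "0 \<le> 1 - 1/P" "1 - 1/P \<le> 1" using P by auto
    have b: "0 \<le> 1 - r" "1 - r \<le> 1" using r0 rw wsmall by auto
    show "0 \<le> F" unfolding F_def using a b by simp
    have "(1 - 1/P)^2 \<le> 1" using a by (simp add: power_le_one)
    thus "F \<le> 1" unfolding F_def using b a by (simp add: mult_le_one)
  qed
  have F1: "1 - F \<ge> 2*w - w^2 + (1 - 2*w) * r"
  proof -
    have e: "1 - F = 2*w - w^2 + (1 - w)^2 * r"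
      unfolding F_def w_def using P0 by (simp add: field_simps power2_eq_square)
    have "(1 - 2*w) * r \<le> (1 - w)^2 * r" using r0
      by (intro mult_right_mono) (auto simp: power2_eq_square algebra_simps)
    thus ?thesis using e by simp
  qed
  have hxD: "\<theta> * x \<le> Dt"
  proof -
    have "x \<le> P powr (-1/\<theta>) * t powr (1 - 1/\<theta>)"
      using root_step[OF P0 xy(1) t(1) th(1)] hx th unfolding \<theta>_def by simp
    thus ?thesis unfolding Dt_def using th by simp
  qed
  have hyD: "\<theta> * y \<le> Ds"
  proof -
    have "y \<le> P powr (-1/\<theta>) * s powr (1 - 1/\<theta>)"
      using root_step[OF P0 xy(2) s(1) th(1)] hy th unfolding \<theta>_def by simp
    thus ?thesis unfolding Ds_def using th by simp
  qed
  have L: "1 - Dt - Ds \<le> (1 - x - y) powr \<theta>"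
  proof -
    have "1 - \<theta> * (x + y) \<le> (1 - (x + y)) powr \<theta>"
      using bern_up[of \<theta> "x+y"] th xy by simp
    thus ?thesis using hxD hyD by (simp add: algebra_simps)
  qed
  have us0: "0 \<le> us" "us \<le> 1 - s" unfolding us_def using s \<tau>0 \<tau>1
    by (auto intro!: mult_nonneg_nonneg mult_left_le simp: mult_le_one)
  have ut0: "0 \<le> ut" "ut \<le> 1 - t" unfolding ut_def using t \<tau>0 \<tau>1
    by (auto intro!: mult_nonneg_nonneg mult_left_le simp: mult_le_one)
  have R: "((1 - s) * (1 - t)) powr (1+\<tau>) \<le> us * ut"
  proof -
    have "((1 - s) * (1 - t)) powr (1+\<tau>) = (1 - s) powr (1+\<tau>) * (1 - t) powr (1+\<tau>)"
      using s t by (simp add: powr_mult)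
    also have "\<dots> \<le> us * ut"
    proof -
      have a: "(1 - s) powr (1+\<tau>) \<le> us" unfolding us_def
        using pow_beta_le[of \<tau> s] \<tau>0 \<tau>1 s by simp
      have b: "(1 - t) powr (1+\<tau>) \<le> ut" unfolding ut_def
        using pow_beta_le[of \<tau> t] \<tau>0 \<tau>1 t by simp
      show ?thesis using a b us0 by (intro mult_mono) auto
    qed
    finally show ?thesis .
  qed
  have amt: "Dt \<le> (1+\<tau>) * t + w" unfolding Dt_def w_def
    using amgm_step[OF P0 t(1) th(1)] th by simp
  have ams: "Ds \<le> (1+\<tau>) * s + w" unfolding Ds_def w_def
    using amgm_step[OF P0 s(1) th(1)] th by simp
  have lgt: "Dt \<le> \<eta> * t" if "\<sigma> \<le> t" unfolding Dt_def \<eta>_def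
    using large_step[OF P0 sigpos that th(1)] by simp
  have lgs: "Ds \<le> \<eta> * s" if "\<sigma> \<le> s" unfolding Ds_def \<eta>_def
    using large_step[OF P0 sigpos that th(1)] by simp
  have main: "F * (us * ut) \<le> 1 - Dt - Ds"
  proof (cases "s \<le> \<sigma>")
    case sA: True
    show ?thesis
    proof (cases "t \<le> \<sigma>")
      case tA: True
      have pb: "us * ut \<le> 1 - (1+\<tau>)*(s+t) + 2*\<sigma>^2"
        unfolding us_def ut_def using prod_bound_A[of \<tau> \<sigma> s t] \<tau>0 \<tau>1 sig0 sigsmall sA tA s t
        by simp
      have "F * (us * ut) \<le> 1 - (1+\<tau>)*(s+t) - 2*w"
        by (rule caseA_arith[where \<sigma>=\<sigma> and r=r])
           (use \<tau>0 \<tau>1 sig0 sigsmall w0 wsmall sw rw2 r0 rw sig2 s t sA tA F0 F1 pb us0 ut0 in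
            \<open>auto simp: field_simps\<close>)
      thus ?thesis using amt ams by (simp add: algebra_simps)
    next
      case tB: False
      have "F * (ut * us) \<le> 1 - Ds - Dt" unfolding us_def
        by (rule caseB_arith[where \<sigma>=\<sigma> and w=w and \<eta>=\<eta>])
           (use \<tau>0 \<tau>1 sigpos sigsmall w0 sigw eta eta0 tB t s sA F0 ams lgt ut0 in auto)
      thus ?thesis by (simp add: algebra_simps)
    qed
  next
    case sB: False
    show ?thesis
    proof (cases "t \<le> \<sigma>")
      case tA: True
      show ?thesis unfolding ut_def
        by (rule caseB_arith[where \<sigma>=\<sigma> and w=w and \<eta>=\<eta>])
           (use \<tau>0 \<tau>1 sigpos sigsmall w0 sigw eta eta0 sB t s tA F0 amt lgs us0 in auto)
    next
      case tB: False
      have "us * ut \<le> (1 - s) * (1 - t)" using us0 ut0 by (intro mult_mono) auto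
      also have "\<dots> \<le> 1 - s/2 - t/2"
      proof -
        have "s * t \<le> s" "s * t \<le> t" using s t by (auto simp: mult_left_le mult_left_le_one_le)
        thus ?thesis by (simp add: field_simps)
      qed
      finally have a: "us * ut \<le> 1 - s/2 - t/2" .
      have b: "F * (us * ut) \<le> us * ut" using F0 us0 ut0 by (simp add: mult_left_le_one_le)
      have "Ds + Dt \<le> \<eta> * s + \<eta> * t" using lgs lgt sB tB by simp
      also have "\<dots> \<le> (1/4) * s + (1/4) * t" using eta s t by (intro add_mono mult_right_mono) auto
      finally show ?thesis using a b s t by linarith
    qed
  qed
  have "F * ((1 - s) * (1 - t)) powr (1+\<tau>) \<le> F * (us * ut)"
    using R F0 by (intro mult_left_mono) auto
  also note main
  also note L
  finally show ?thesis unfolding F_def r_def \<theta>_def by simp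
qed

definition Mf :: "real \<Rightarrow> real \<Rightarrow> real \<Rightarrow> real \<Rightarrow> real" where
  "Mf \<theta> e a b = (e / (a * b)) powr \<theta> * a * b"

lemma Mf_eq:
  assumes "e \<ge> 0" "a > 0" "b > 0"
  shows "Mf \<theta> e a b = e powr \<theta> * (a * b) powr (1 - \<theta>)"
proof -
  have ab: "a * b > 0" using assms by simp
  have "Mf \<theta> e a b = e powr \<theta> / (a*b) powr \<theta> * (a * b) powr 1"
    unfolding Mf_def using ab by (simp add: powr_divide)
  also have "\<dots> = e powr \<theta> * ((a * b) powr 1 / (a*b) powr \<theta>)" by simp
  also have "(a * b) powr 1 / (a*b) powr \<theta> = (a * b) powr (1 - \<theta>)" by (simp add: powr_diff)
  finally show ?thesis .
qed

lemma Mf_zero: "Mf \<theta> 0 a b = 0" by (simp add: Mf_def)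

lemma norm_step:
  fixes P E A B Y e2 \<theta> :: real
  assumes "P \<ge> 0" "E > 0" "A > 0" "B > 0" "Y > 0" "e2 \<ge> 0"
    "P * (e2 powr \<theta> * (A*Y) powr (1-\<theta>)) \<le> E powr \<theta> * (A*B) powr (1-\<theta>)"
  shows "P * (e2/E) powr \<theta> \<le> (Y/B) powr (\<theta> - 1)"
proof -
  define c where "c = 1 - \<theta>"
  have "A powr c * (P * e2 powr \<theta> * Y powr c) \<le> A powr c * (E powr \<theta> * B powr c)"
    using assms(7) unfolding c_def[symmetric] by (simp add: powr_mult algebra_simps)
  hence a: "P * e2 powr \<theta> * Y powr c \<le> E powr \<theta> * B powr c"
    using assms by (simp add: mult_le_cancel_left_pos)
  have "P * (e2/E) powr \<theta> = (P * e2 powr \<theta> * Y powr c) / (E powr \<theta> * Y powr c)"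
    using assms by (simp add: powr_divide)
  also have "\<dots> \<le> (E powr \<theta> * B powr c) / (E powr \<theta> * Y powr c)"
    using a assms by (intro divide_right_mono) auto
  also have "\<dots> = B powr c / Y powr c" using assms by simp
  also have "\<dots> = (Y/B) powr (\<theta> - 1)"
    unfolding c_def using assms
    by (simp add: powr_divide powr_diff powr_minus_divide divide_simps)
  finally show ?thesis .
qed

lemma bridge:
  fixes \<tau> P A B e1 e2 e3 a1 X b1 Y :: real
  assumes \<tau>0: "0 < \<tau>" and \<tau>1: "\<tau> < 1/100" and P: "P \<ge> 10^20"
    and AB: "A > 0" "B > 0" and nn: "a1 \<ge> 0" "X \<ge> 0" "b1 \<ge> 0" "Y \<ge> 0"
    and sA: "a1 + X \<le> A" and sB: "b1 + Y \<le> B"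
    and en: "e1 \<ge> 0" "e2 \<ge> 0" "e3 \<ge> 0" and epos: "e1 + e2 + e3 > 0"
    and h1: "e1 > 0 \<Longrightarrow> a1 > 0 \<and> b1 > 0"
    and h2: "e2 > 0 \<Longrightarrow> a1 > 0 \<and> Y > 0"
    and h3: "e3 > 0 \<Longrightarrow> X > 0 \<and> b1 > 0"
  shows "P * Mf (2+\<tau>) e2 a1 Y \<ge> (1 - 1 / P powr (1+\<tau>/4)) * Mf (2+\<tau>) (e1+e2+e3) A B
       \<or> P * Mf (2+\<tau>) e3 X b1 \<ge> (1 - 1 / P powr (1+\<tau>/4)) * Mf (2+\<tau>) (e1+e2+e3) A B
       \<or> Mf (2+\<tau>) e1 a1 b1 \<ge> (1 - 1/P)^2 * (1 - 1 / P powr (1+\<tau>/4)) * Mf (2+\<tau>) (e1+e2+e3) A B"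
proof (rule ccontr)
  define \<theta> where "\<theta> = 2+\<tau>"
  define r where "r = 1 / P powr (1+\<tau>/4)"
  define e where "e = e1+e2+e3"
  define F where "F = (1 - 1/P)^2 * (1 - r)"
  assume "\<not> ?thesis"
  hence n2: "P * Mf \<theta> e2 a1 Y < (1 - r) * Mf \<theta> e A B"
    and n3: "P * Mf \<theta> e3 X b1 < (1 - r) * Mf \<theta> e A B"
    and n1: "Mf \<theta> e1 a1 b1 < F * Mf \<theta> e A B"
    unfolding \<theta>_def r_def e_def F_def by auto
  have P0: "P > 1" using P by simp
  have th: "\<theta> > 1" using \<tau>0 by (simp add: \<theta>_def)
  have e0: "e > 0" using epos by (simp add: e_def)
  have r0: "0 < r" "r \<le> 1/P" using consts_r[OF \<tau>0 \<tau>1 P] unfolding r_def by auto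
  have "1/P < 1" using P0 by simp
  hence r1: "1 - r \<le> 1" "0 < 1 - r" using r0 by auto
  have mG: "Mf \<theta> e A B = e powr \<theta> * (A*B) powr (1-\<theta>)" using Mf_eq e0 AB by simp
  have mG0: "Mf \<theta> e A B > 0" using mG e0 AB by simp
  have c0: "1 - \<theta> \<le> 0" using th by simp
  have x2: "P * (e2/e) powr \<theta> \<le> (Y/B) powr (\<theta> - 1)"
  proof (cases "e2 = 0")
    case True then show ?thesis by simp
  next
    case False
    hence pos: "a1 > 0" "Y > 0" using h2 en by auto
    have "P * (e2 powr \<theta> * (A*Y) powr (1-\<theta>)) \<le> P * (e2 powr \<theta> * (a1*Y) powr (1-\<theta>))"
      using pos sA nn P0 c0 by (intro mult_left_mono powr_mono2') auto
    also have "\<dots> = P * Mf \<theta> e2 a1 Y" using Mf_eq[of e2 a1 Y] pos en by simp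
    also have "\<dots> \<le> Mf \<theta> e A B" using n2 r1 mG0
      by (smt (verit) mult_left_le_one_le)
    finally show ?thesis using norm_step[of P e A B Y e2 \<theta>] P0 e0 AB pos en mG by simp
  qed
  have x3: "P * (e3/e) powr \<theta> \<le> (X/A) powr (\<theta> - 1)"
  proof (cases "e3 = 0")
    case True then show ?thesis by simp
  next
    case False
    hence pos: "X > 0" "b1 > 0" using h3 en by auto
    have "P * (e3 powr \<theta> * (B*X) powr (1-\<theta>)) \<le> P * (e3 powr \<theta> * (X*b1) powr (1-\<theta>))"
      using pos sB nn P0 c0 by (intro mult_left_mono powr_mono2') (auto simp: mult.commute)
    also have "\<dots> = P * Mf \<theta> e3 X b1" using Mf_eq[of e3 X b1] pos en by simp
    also have "\<dots> \<le> Mf \<theta> e A B" using n3 r1 mG0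
      by (smt (verit) mult_left_le_one_le)
    also have "\<dots> = e powr \<theta> * (B*A) powr (1-\<theta>)" using mG by (simp add: mult.commute)
    finally show ?thesis using norm_step[of P e B A X e3 \<theta>] P0 e0 AB pos en by simp
  qed
  define s where "s = X/A"
  define t where "t = Y/B"
  have s01: "0 \<le> s" "s \<le> 1" using nn sA AB by (auto simp: s_def)
  have t01: "0 \<le> t" "t \<le> 1" using nn sB AB by (auto simp: t_def)
  have "e2/e + e3/e = (e2+e3)/e" by (simp add: add_divide_distrib)
  also have "\<dots> \<le> 1" using en e0 by (simp add: divide_le_eq e_def)
  finally have xy: "0 \<le> e2/e" "0 \<le> e3/e" "e2/e + e3/e \<le> 1" using en e0 by auto
  have "e1/e = (e - e2 - e3)/e" by (simp add: e_def)
  also have "\<dots> = e/e - e2/e - e3/e" by (simp add: diff_divide_distrib)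
  finally have one: "1 - e2/e - e3/e = e1/e" using e0 by simp
  have core': "F * ((1 - s) * (1 - t)) powr (1+\<tau>) \<le> (e1/e) powr \<theta>"
    using core[OF \<tau>0 \<tau>1 P s01 t01 xy] x2 x3 one
    unfolding F_def r_def \<theta>_def s_def t_def by simp
  have F0: "F > 0" unfolding F_def using P0 r1 by simp
  show False
  proof (cases "e1 = 0")
    case True
    hence "F * ((1 - s) * (1 - t)) powr (1+\<tau>) \<le> 0" using core' th by simp
    hence "((1 - s) * (1 - t)) powr (1+\<tau>) = 0" using F0
      by (smt (verit) mult_pos_pos powr_ge_zero)
    hence "(1 - s) * (1 - t) = 0" by simp
    hence "s = 1 \<or> t = 1" by simp
    thus False
    proof
      assume "s = 1"
      hence "X = A" using AB by (simp add: s_def)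
      hence "a1 = 0" using sA nn by simp
      hence "e2 = 0" using h2 en by force
      hence "e3/e = 1" using True e0 by (simp add: e_def)
      thus False using x3 \<open>s = 1\<close> P0 unfolding s_def by simp
    next
      assume "t = 1"
      hence "Y = B" using AB by (simp add: t_def)
      hence "b1 = 0" using sB nn by simp
      hence "e3 = 0" using h3 en by force
      hence "e2/e = 1" using True e0 by (simp add: e_def)
      thus False using x2 \<open>t = 1\<close> P0 unfolding t_def by simp
    qed
  next
    case False
    hence e1p: "e1 > 0" using en by simp
    hence pos: "a1 > 0" "b1 > 0" using h1 by auto
    have AX: "A - X > 0" "B - Y > 0" using pos sA sB by auto
    have st: "1 - s > 0" "1 - t > 0" using AX AB by (auto simp: s_def t_def field_simps)
    have "Mf \<theta> e1 a1 b1 = e1 powr \<theta> * (a1*b1) powr (1-\<theta>)" using Mf_eq pos en by simp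
    also have "\<dots> \<ge> e1 powr \<theta> * ((A - X)*(B - Y)) powr (1-\<theta>)"
      using pos sA sB c0 by (intro mult_left_mono powr_mono2' mult_mono) auto
    finally have a: "Mf \<theta> e1 a1 b1 \<ge> e1 powr \<theta> * ((A - X)*(B - Y)) powr (1-\<theta>)" .
    have AXe: "(A - X)*(B - Y) = (A*B) * ((1-s)*(1-t))" using AB
      by (simp add: s_def t_def field_simps)
    have e1e: "e1 powr \<theta> = (e1/e) powr \<theta> * e powr \<theta>" using e0 en
      by (simp add: powr_divide)
    define Q where "Q = (1-s)*(1-t)"
    have Q0: "Q > 0" using st by (simp add: Q_def)
    have eq: "e1 powr \<theta> * ((A - X)*(B - Y)) powr (1-\<theta>)
        = ((e1/e) powr \<theta> * Q powr (1-\<theta>)) * (e powr \<theta> * (A*B) powr (1-\<theta>))"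
      unfolding AXe e1e Q_def using AB st by (simp add: powr_mult)
    have k1: "(F * Q powr (1+\<tau>)) * Q powr (1-\<theta>) \<le> (e1/e) powr \<theta> * Q powr (1-\<theta>)"
      using core' unfolding Q_def[symmetric] by (rule mult_right_mono) simp
    have k2: "(F * Q powr (1+\<tau>)) * Q powr (1-\<theta>) = F"
    proof -
      have "Q powr (1+\<tau>) * Q powr (1-\<theta>) = Q powr ((1+\<tau>) + (1-\<theta>))"
        by (rule powr_add[symmetric])
      also have "(1+\<tau>) + (1-\<theta>) = 0" by (simp add: \<theta>_def)
      finally show ?thesis using Q0 by simp
    qed
    have "F * Mf \<theta> e A B \<le> ((e1/e) powr \<theta> * Q powr (1-\<theta>)) * Mf \<theta> e A B"
      using k1 k2 mG0 by (intro mult_right_mono) auto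
    hence "F * Mf \<theta> e A B \<le> e1 powr \<theta> * ((A - X)*(B - Y)) powr (1-\<theta>)"
      using eq mG by simp
    thus False using a n1 by simp
  qed
qed

lemma rden_pos: "rden r > 0"
  unfolding rden_def using quotient_of_denom_pos' by simp

lemma rnum_pos: "r > 0 \<Longrightarrow> rnum r > 0"
proof -
  assume r: "r > 0"
  obtain n d where q: "quotient_of r = (n, d)" by (cases "quotient_of r")
  have d: "d > 0" using quotient_of_denom_pos[OF q] .
  have "r = of_int n / of_int d" using quotient_of_div[OF q] .
  hence "n > 0" using r d by (simp add: zero_less_divide_iff)
  thus ?thesis using q by (simp add: rnum_def)
qed

lemma rcoprime: "coprime (rnum r) (rden r)"
  unfolding rnum_def rden_def using quotient_of_coprime[of r "fst (quotient_of r)" "snd (quotient_of r)"] by simp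

lemma mult_pos_dvd:
  fixes p :: nat and x :: int
  assumes "multiplicity (int p) x > 0"
  shows "int p dvd x"
  using multiplicity_dvd'[of 1 "int p" x] assms by simp

lemma mult_one_zero:
  fixes p :: nat
  assumes "prime p"
  shows "multiplicity (int p) (rnum r) = 0 \<or> multiplicity (int p) (rden r) = 0"
proof (rule ccontr)
  assume "\<not> ?thesis"
  hence "int p dvd rnum r" "int p dvd rden r" using mult_pos_dvd by auto
  hence "is_unit (int p)" using rcoprime coprime_common_divisor by blast
  moreover have "prime (int p)" using assms by (simp add: prime_nat_int_transfer)
  ultimately show False using not_prime_unit by blast
qed

lemma ep_nonpos_num:
  assumes "prime p" "ep p r \<le> 0"
  shows "multiplicity (int p) (rnum r) = 0"
  using mult_one_zero[OF assms(1), of r] assms(2) unfolding ep_def by auto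

lemma ep_nonneg_den:
  assumes "prime p" "ep p r \<ge> 0"
  shows "multiplicity (int p) (rden r) = 0"
  using mult_one_zero[OF assms(1), of r] assms(2) unfolding ep_def by auto

lemma ep_nonpos_den:
  assumes "prime p" "ep p r \<le> 0"
  shows "int (multiplicity (int p) (rden r)) = - ep p r"
  using ep_nonpos_num[OF assms] unfolding ep_def by simp

lemma ep_nonneg_num:
  assumes "prime p" "ep p r \<ge> 0"
  shows "int (multiplicity (int p) (rnum r)) = ep p r"
  using ep_nonneg_den[OF assms] unfolding ep_def by simp

lemma prime_int_not_dvd_of_mult0:
  fixes p :: nat and x :: int
  assumes "prime p" "x \<noteq> 0" "multiplicity (int p) x = 0"
  shows "\<not> int p dvd x"
proof
  assume "int p dvd x"
  have "prime (int p)" using assms by (simp add: prime_nat_int_transfer)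
  hence nu: "\<not> is_unit (int p)" using not_prime_unit by blast
  hence "1 \<le> multiplicity (int p) x"
    using multiplicity_geI[of x "int p" 1] assms \<open>int p dvd x\<close> by auto
  thus False using assms by simp
qed

lemma witness_neg:
  fixes v w :: rat and q :: nat
  assumes "prime q" "v > 0" "w > 0"
    "int q dvd gcd (rnum v) (rnum w) * gcd (rden v) (rden w)"
    "ep q v \<le> 0" "ep q w \<le> 0"
  shows "ep q v \<le> -1 \<and> ep q w \<le> -1"
proof -
  have pq: "prime (int q)" using assms by (simp add: prime_nat_int_transfer)
  have nu: "\<not> is_unit (int q)" using pq not_prime_unit by blast
  have nv: "\<not> int q dvd rnum v"
    using prime_int_not_dvd_of_mult0[OF assms(1)] ep_nonpos_num[OF assms(1,5)] rnum_pos[OF assms(2)] by simp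
  hence "\<not> int q dvd gcd (rnum v) (rnum w)" by (meson dvd_trans gcd_dvd1)
  hence "int q dvd gcd (rden v) (rden w)" using assms(4) prime_dvd_mult_iff[OF pq] by blast
  hence dv: "int q dvd rden v" "int q dvd rden w" by (meson dvd_trans gcd_dvd1 gcd_dvd2)+
  have "1 \<le> multiplicity (int q) (rden v)"
    using multiplicity_geI[of "rden v" "int q" 1] dv rden_pos[of v] nu by auto
  moreover have "1 \<le> multiplicity (int q) (rden w)"
    using multiplicity_geI[of "rden w" "int q" 1] dv rden_pos[of w] nu by auto
  ultimately show ?thesis using ep_nonpos_den[OF assms(1,5)] ep_nonpos_den[OF assms(1,6)] by linarith
qed

lemma witness_pos:
  fixes v w :: rat and q :: nat
  assumes "prime q" "v > 0" "w > 0"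
    "int q dvd gcd (rnum v) (rnum w) * gcd (rden v) (rden w)"
    "ep q v \<ge> 0" "ep q w \<ge> 0"
  shows "ep q v \<ge> 1 \<and> ep q w \<ge> 1"
proof -
  have pq: "prime (int q)" using assms by (simp add: prime_nat_int_transfer)
  have nu: "\<not> is_unit (int q)" using pq not_prime_unit by blast
  have nv: "\<not> int q dvd rden v"
    using prime_int_not_dvd_of_mult0[OF assms(1)] ep_nonneg_den[OF assms(1,5)] rden_pos[of v] by simp
  hence "\<not> int q dvd gcd (rden v) (rden w)" by (meson dvd_trans gcd_dvd1)
  hence "int q dvd gcd (rnum v) (rnum w)" using assms(4) prime_dvd_mult_iff[OF pq] by blast
  hence dv: "int q dvd rnum v" "int q dvd rnum w" by (meson dvd_trans gcd_dvd1 gcd_dvd2)+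
  have "1 \<le> multiplicity (int q) (rnum v)"
    using multiplicity_geI[of "rnum v" "int q" 1] dv rnum_pos[OF assms(2)] nu by auto
  moreover have "1 \<le> multiplicity (int q) (rnum w)"
    using multiplicity_geI[of "rnum w" "int q" 1] dv rnum_pos[OF assms(3)] nu by auto
  ultimately show ?thesis using ep_nonneg_num[OF assms(1,5)] ep_nonneg_num[OF assms(1,6)] by linarith
qed

lemma struct_neg_all:
  assumes "structured G" "q \<in> RG G" "(v,w) \<in> gE G" "ep q v \<le> -1" "ep q w \<le> -1"
  shows "\<forall>(v',w')\<in>gE G. ep q v' \<le> 0 \<and> ep q w' \<le> 0"
proof -
  obtain k where k: "\<forall>(v,w)\<in>gE G. (ep q v - k, ep q w - k) \<in> {(-1,0), (0,-1), (0,0), (0,1), (1,0)}"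
    using assms(1,2) unfolding structured_def by blast
  have "k \<le> -1" using k assms(3-5) by fastforce
  thus ?thesis using k by fastforce
qed

lemma struct_pos_all:
  assumes "structured G" "q \<in> RG G" "(v,w) \<in> gE G" "ep q v \<ge> 1" "ep q w \<ge> 1"
  shows "\<forall>(v',w')\<in>gE G. ep q v' \<ge> 0 \<and> ep q w' \<ge> 0"
proof -
  obtain k where k: "\<forall>(v,w)\<in>gE G. (ep q v - k, ep q w - k) \<in> {(-1,0), (0,-1), (0,0), (0,1), (1,0)}"
    using assms(1,2) unfolding structured_def by blast
  have "k \<ge> 1" using k assms(3-5) by fastforce
  thus ?thesis using k by fastforce
qed

lemma gcd_sub:
  assumes "is_gcd_graph H" "V' \<subseteq> gV H" "W' \<subseteq> gW H" "E' \<subseteq> gE H \<inter> (V' \<times> W')"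
  shows "is_gcd_graph (H\<lparr>gV := V', gW := W', gE := E'\<rparr>)"
  using assms unfolding is_gcd_graph_def is_wbg_def
  by (auto intro: finite_subset) (meson subsetD)+

lemma gcd_ext:
  assumes G: "is_gcd_graph G" and p: "prime p" "p \<notin> gP G"
    and sub: "V' \<subseteq> gV G" "W' \<subseteq> gW G" "E' \<subseteq> gE G" "E' \<subseteq> V' \<times> W'"
    and ij: "i \<le> 0" "j \<le> 0"
    and hv: "\<forall>v\<in>V'. ep p v \<le> i" and hw: "\<forall>w\<in>W'. ep p w \<le> j"
    and he: "\<forall>(v,w)\<in>E'. max (ep p v) (ep p w) = max i j"
  shows "is_gcd_graph (G\<lparr>gV := V', gW := W', gE := E', gP := insert p (gP G),
            gf := (gf G)(p := i), gg := (gg G)(p := j)\<rparr>)"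
proof -
  have wbg: "is_wbg (gmu G) (gV G) (gW G) (gE G)" using G by (simp add: is_gcd_graph_def)
  have wbg': "is_wbg (gmu G) V' W' E'"
    using wbg sub unfolding is_wbg_def by (auto intro: finite_subset)
  have pos: "\<forall>v\<in>V'. v > 0" "\<forall>w\<in>W'. w > 0" using wbg' by (auto simp: is_wbg_def)
  have old: "\<forall>q\<in>gP G. \<forall>v\<in>V'. \<forall>w\<in>W'.
        (int q) ^ pos_part (gf G q) dvd rnum v \<and>
        (int q) ^ pos_part (gg G q) dvd rnum w \<and>
        (int q) ^ neg_part (gf G q) dvd rden v \<and>
        (int q) ^ neg_part (gg G q) dvd rden w \<and>
        ((v, w) \<in> E' \<longrightarrow>
           multiplicity (int q) (gcd (rnum v) (rnum w)) = min (pos_part (gf G q)) (pos_part (gg G q)) \<and>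
           multiplicity (int q) (gcd (rden v) (rden w)) = min (neg_part (gf G q)) (neg_part (gg G q)))"
    using G sub unfolding is_gcd_graph_def by blast
  have pp: "prime (int p)" using p by (simp add: prime_nat_int_transfer)
  have new: "\<forall>v\<in>V'. \<forall>w\<in>W'.
        (int p) ^ pos_part i dvd rnum v \<and>
        (int p) ^ pos_part j dvd rnum w \<and>
        (int p) ^ neg_part i dvd rden v \<and>
        (int p) ^ neg_part j dvd rden w \<and>
        ((v, w) \<in> E' \<longrightarrow>
           multiplicity (int p) (gcd (rnum v) (rnum w)) = min (pos_part i) (pos_part j) \<and>
           multiplicity (int p) (gcd (rden v) (rden w)) = min (neg_part i) (neg_part j))"
  proof (intro ballI conjI impI)
    fix v w assume v: "v \<in> V'" and w: "w \<in> W'"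
    have ev: "ep p v \<le> i" "ep p w \<le> j" using hv hw v w by auto
    have ev0: "ep p v \<le> 0" "ep p w \<le> 0" using ev ij by auto
    have ppi: "pos_part i = 0" "pos_part j = 0" using ij by (auto simp: pos_part_def)
    show "(int p) ^ pos_part i dvd rnum v" "(int p) ^ pos_part j dvd rnum w" using ppi by auto
    have dv: "int (multiplicity (int p) (rden v)) = - ep p v"
      using ep_nonpos_den[OF p(1) ev0(1)] .
    have dw: "int (multiplicity (int p) (rden w)) = - ep p w"
      using ep_nonpos_den[OF p(1) ev0(2)] .
    show "(int p) ^ neg_part i dvd rden v"
      by (rule multiplicity_dvd') (use dv ev in \<open>auto simp: neg_part_def\<close>)
    show "(int p) ^ neg_part j dvd rden w"
      by (rule multiplicity_dvd') (use dw ev in \<open>auto simp: neg_part_def\<close>)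
    assume e: "(v, w) \<in> E'"
    have nz: "rnum v \<noteq> 0" "rnum w \<noteq> 0" "rden v \<noteq> 0" "rden w \<noteq> 0"
      using rnum_pos rden_pos pos v w by (auto simp: less_le)
    show "multiplicity (int p) (gcd (rnum v) (rnum w)) = min (pos_part i) (pos_part j)"
      using multiplicity_gcd[OF nz(1,2) pp] ep_nonpos_num[OF p(1) ev0(1)] ep_nonpos_num[OF p(1) ev0(2)] ppi
      by simp
    have mx: "max (ep p v) (ep p w) = max i j" using he e by auto
    show "multiplicity (int p) (gcd (rden v) (rden w)) = min (neg_part i) (neg_part j)"
    proof -
      have "multiplicity (int p) (gcd (rden v) (rden w)) = min (multiplicity (int p) (rden v)) (multiplicity (int p) (rden w))"
        using multiplicity_gcd[OF nz(3,4) pp] .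
      moreover have "int (min (multiplicity (int p) (rden v)) (multiplicity (int p) (rden w))) = - max (ep p v) (ep p w)"
        using dv dw by linarith
      moreover have "int (min (neg_part i) (neg_part j)) = - max i j"
        using ij by (auto simp: neg_part_def)
      ultimately show ?thesis using mx by linarith
    qed
  qed
  show ?thesis
    unfolding is_gcd_graph_def using wbg' G p old new
    by (auto simp: is_gcd_graph_def)
qed

lemma mu_theta_Mf: "mu_theta \<theta> \<mu> V W E = Mf \<theta> (esum \<mu> E) (wsum \<mu> V) (wsum \<mu> W)"
  unfolding mu_theta_def Mf_def Defs.density_def by (cases "E = {}") (simp_all add: esum_def)

lemma mu_theta_empty: "mu_theta \<theta> \<mu> V W {} = 0"
  unfolding mu_theta_def Defs.density_def by simp

lemma finite_max_real:
  fixes f :: "'a \<Rightarrow> real"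
  assumes "finite S" "S \<noteq> {}"
  shows "\<exists>x\<in>S. \<forall>y\<in>S. f y \<le> f x"
proof -
  have "Max (f ` S) \<in> f ` S" using assms by simp
  then obtain x where x: "x \<in> S" "f x = Max (f ` S)" by auto
  have "\<forall>y\<in>S. f y \<le> f x" using x assms by simp
  thus ?thesis using x by blast
qed

lemma finish:
  fixes \<tau> :: real and G Gc :: gcd_graph and p :: nat
  assumes G: "is_gcd_graph G" "structured G" and pR: "p \<in> RGminus G"
    and Gc: "Gc = G\<lparr>gV := V', gW := W', gE := E', gP := insert p (gP G),
            gf := (gf G)(p := i), gg := (gg G)(p := j)\<rparr>"
    and gc: "is_gcd_graph Gc" and sub: "E' \<subseteq> gE G" "V' \<subseteq> gV G" "W' \<subseteq> gW G"
    and ij: "i \<le> 0" "j \<le> 0" and vneg: "\<forall>v\<in>V'. ep p v \<le> 0" and wneg: "\<forall>w\<in>W'. ep p w \<le> 0"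
    and qual: "quality (2 + \<tau>) Gc \<ge> quality (2 + \<tau>) G *
        ((1 - (if i = j \<and> j < 0 then 1 else 0) / real p)^2 * (1 - 1 / real p powr (1 + \<tau>/4)))"
    and qpos: "quality (2 + \<tau>) G *
        ((1 - (if i = j \<and> j < 0 then 1 else 0) / real p)^2 * (1 - 1 / real p powr (1 + \<tau>/4))) > 0"
  shows "\<exists>G'. numerator_exact G' G \<and>
      nontrivial G' \<and> maximal (2 + \<tau>) G' \<and>
      gP G \<subset> gP G' \<and> gP G' \<subseteq> gP G \<union> RGminus G \<and>
      RGminus G' \<subset> RGminus G \<and> RGplus G' \<subseteq> RGplus G \<and>
      (\<forall>p\<in>gP G' - gP G. gf G' p \<le> 0 \<and> gg G' p \<le> 0) \<and>
      quality (2 + \<tau>) G' \<ge> quality (2 + \<tau>) G *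
        (\<Prod>p\<in>gP G' - gP G.
           (1 - (if gf G' p = gg G' p \<and> gg G' p < 0 then 1 else 0) / real p)^2 *
           (1 - 1 / real p powr (1 + \<tau>/4)))"
proof -
  have pRG: "p \<in> RG G" using pR by (simp add: RGminus_def)
  hence pprime: "prime p" and pnot: "p \<notin> gP G" by (auto simp: RG_def)
  have wbgc: "is_wbg (gmu G) V' W' E'" using gc Gc by (simp add: is_gcd_graph_def)
  have wbg: "is_wbg (gmu G) (gV G) (gW G) (gE G)" using G by (simp add: is_gcd_graph_def)
  have fin: "finite V'" "finite W'" "E' \<subseteq> V' \<times> W'" using wbgc by (auto simp: is_wbg_def)
  have finE: "finite E'" using fin finite_subset[OF fin(3)] by blast
  define S where "S = {(V'',W'',E''). V'' \<subseteq> V' \<and> W'' \<subseteq> W' \<and> E'' \<subseteq> E' \<inter> (V'' \<times> W'')}"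
  define f where "f = (\<lambda>(V'',W'',E''). mu_theta (2 + \<tau>) (gmu G) V'' W'' E'')"
  have "S \<subseteq> Pow V' \<times> Pow W' \<times> Pow E'" unfolding S_def by auto
  hence finS: "finite S" using fin finE by (meson finite_Pow_iff finite_SigmaI finite_subset)
  have inS: "(V', W', E') \<in> S" unfolding S_def using fin by auto
  obtain x where x: "x \<in> S" "\<forall>y\<in>S. f y \<le> f x" using finite_max_real[OF finS] inS by blast
  obtain V0 W0 E0 where x0: "x = (V0, W0, E0)" by (cases x) auto
  have S0: "V0 \<subseteq> V'" "W0 \<subseteq> W'" "E0 \<subseteq> E' \<inter> (V0 \<times> W0)" using x(1) x0 by (auto simp: S_def)
  define G' where "G' = Gc\<lparr>gV := V0, gW := W0, gE := E0\<rparr>"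
  have G'f: "gP G' = insert p (gP G)" "gf G' = (gf G)(p := i)" "gg G' = (gg G)(p := j)"
    "gmu G' = gmu G" "gV G' = V0" "gW G' = W0" "gE G' = E0"
    unfolding G'_def Gc by simp_all
  have gG': "is_gcd_graph G'" unfolding G'_def
    by (rule gcd_sub[OF gc]) (use S0 Gc in auto)
  have maxG': "maximal (2 + \<tau>) G'"
    unfolding maximal_def
  proof (intro allI impI)
    fix V3 W3 E3
    assume "V3 \<subseteq> gV G'" "W3 \<subseteq> gW G'" "E3 \<subseteq> gE G' \<inter> (V3 \<times> W3)"
    hence "(V3, W3, E3) \<in> S" using S0 G'f unfolding S_def by auto
    hence "f (V3, W3, E3) \<le> f x" using x by blast
    thus "mu_theta (2 + \<tau>) (gmu G') V3 W3 E3 \<le> mu_theta (2 + \<tau>) (gmu G') (gV G') (gW G') (gE G')"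
      using G'f x0 by (simp add: f_def)
  qed
  define PP where "PP = (\<Prod>q\<in>insert p (gP G). real q ^ nat \<bar>((gf G)(p := i)) q - ((gg G)(p := j)) q\<bar>)"
  have Pi0: "PP \<ge> 0" unfolding PP_def by (intro prod_nonneg) auto
  have qG': "quality (2 + \<tau>) G' = mu_theta (2 + \<tau>) (gmu G) V0 W0 E0 * PP"
    unfolding quality_def PP_def G'f ..
  have qGc: "quality (2 + \<tau>) Gc = mu_theta (2 + \<tau>) (gmu G) V' W' E' * PP"
    unfolding quality_def PP_def Gc by simp
  have "f (V', W', E') \<le> f x" using x inS by blast
  hence "mu_theta (2 + \<tau>) (gmu G) V' W' E' \<le> mu_theta (2 + \<tau>) (gmu G) V0 W0 E0"
    using x0 by (simp add: f_def)
  hence qge: "quality (2 + \<tau>) Gc \<le> quality (2 + \<tau>) G'"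
    unfolding qG' qGc using Pi0 by (intro mult_right_mono) auto
  have ntr: "nontrivial G'"
  proof (rule ccontr)
    assume "\<not> nontrivial G'"
    hence "E0 = {}" using G'f by (simp add: nontrivial_def)
    hence "quality (2 + \<tau>) G' = 0" unfolding qG' by (simp add: mu_theta_empty)
    thus False using qge qual qpos by linarith
  qed
  have Vsub: "gV G' \<subseteq> gV G" "gW G' \<subseteq> gW G" "gE G' \<subseteq> gE G"
    using S0 sub G'f by auto
  have ex_v: "\<forall>v\<in>V0. multiplicity (int p) (rnum v) = pos_part i"
    using S0 vneg ep_nonpos_num[OF pprime] ij by (auto simp: pos_part_def)
  have ex_w: "\<forall>w\<in>W0. multiplicity (int p) (rnum w) = pos_part j"
    using S0 wneg ep_nonpos_num[OF pprime] ij by (auto simp: pos_part_def)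
  have diff: "gP G' - gP G = {p}" using G'f pnot by auto
  have ne: "numerator_exact G' G"
    unfolding numerator_exact_def gcd_subgraph_def
    using gG' Vsub G'f diff ex_v ex_w pnot by auto
  have posV: "\<forall>v\<in>gV G. v > 0" "\<forall>w\<in>gW G. w > 0" "gE G \<subseteq> gV G \<times> gW G"
    using wbg by (auto simp: is_wbg_def)
  have RG_sub: "q \<in> RG G" if "q \<in> RG G'" for q
    using that Vsub G'f unfolding RG_def by auto
  have Rm: "RGminus G' \<subseteq> RGminus G"
  proof
    fix q assume q: "q \<in> RGminus G'"
    hence qR': "q \<in> RG G'" and qall: "\<forall>(v,w)\<in>gE G'. ep q v \<le> 0 \<and> ep q w \<le> 0"
      by (auto simp: RGminus_def)
    have qR: "q \<in> RG G" using RG_sub qR' .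
    obtain v w where vw: "(v,w) \<in> gE G'" "int q dvd gcd (rnum v) (rnum w) * gcd (rden v) (rden w)"
      and qp: "prime q" using qR' unfolding RG_def by auto
    have vwG: "(v,w) \<in> gE G" using vw Vsub by auto
    have "ep q v \<le> -1 \<and> ep q w \<le> -1"
      by (rule witness_neg[OF qp _ _ vw(2)]) (use vwG posV qall vw in auto)
    hence "\<forall>(v',w')\<in>gE G. ep q v' \<le> 0 \<and> ep q w' \<le> 0"
      using struct_neg_all[OF G(2) qR vwG] by auto
    thus "q \<in> RGminus G" using qR by (simp add: RGminus_def)
  qed
  have pnotR: "p \<notin> RGminus G'" using G'f by (auto simp: RGminus_def RG_def)
  have Rm': "RGminus G' \<subset> RGminus G" using Rm pnotR pR by blast
  have Rp: "RGplus G' \<subseteq> RGplus G"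
  proof
    fix q assume q: "q \<in> RGplus G'"
    hence qR': "q \<in> RG G'" and qall: "\<forall>(v,w)\<in>gE G'. ep q v \<ge> 0 \<and> ep q w \<ge> 0"
      by (auto simp: RGplus_def)
    have qR: "q \<in> RG G" using RG_sub qR' .
    obtain v w where vw: "(v,w) \<in> gE G'" "int q dvd gcd (rnum v) (rnum w) * gcd (rden v) (rden w)"
      and qp: "prime q" using qR' unfolding RG_def by auto
    have vwG: "(v,w) \<in> gE G" using vw Vsub by auto
    have "ep q v \<ge> 1 \<and> ep q w \<ge> 1"
      by (rule witness_pos[OF qp _ _ vw(2)]) (use vwG posV qall vw in auto)
    hence "\<forall>(v',w')\<in>gE G. ep q v' \<ge> 0 \<and> ep q w' \<ge> 0"
      using struct_pos_all[OF G(2) qR vwG] by auto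
    thus "q \<in> RGplus G" using qR by (simp add: RGplus_def)
  qed
  have Psub: "gP G \<subset> gP G'" "gP G' \<subseteq> gP G \<union> RGminus G" using G'f pnot pR by auto
  have sgn: "\<forall>q\<in>gP G' - gP G. gf G' q \<le> 0 \<and> gg G' q \<le> 0" using diff G'f ij by auto
  have prodeq: "(\<Prod>q\<in>gP G' - gP G.
           (1 - (if gf G' q = gg G' q \<and> gg G' q < 0 then 1 else 0) / real q)^2 *
           (1 - 1 / real q powr (1 + \<tau>/4)))
      = (1 - (if i = j \<and> j < 0 then 1 else 0) / real p)^2 * (1 - 1 / real p powr (1 + \<tau>/4))"
    unfolding diff using G'f by simp
  have "quality (2 + \<tau>) G' \<ge> quality (2 + \<tau>) G *
        (\<Prod>q\<in>gP G' - gP G.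
           (1 - (if gf G' q = gg G' q \<and> gg G' q < 0 then 1 else 0) / real q)^2 *
           (1 - 1 / real q powr (1 + \<tau>/4)))"
    unfolding prodeq using qual qge by linarith
  thus ?thesis using ne ntr maxG' Psub Rm' Rp sgn by blast
qed

lemma quality_ext:
  assumes "finite (gP G)" "p \<notin> gP G"
  shows "quality \<theta> (G\<lparr>gV := V', gW := W', gE := E', gP := insert p (gP G),
            gf := (gf G)(p := i), gg := (gg G)(p := j)\<rparr>)
    = Mf \<theta> (esum (gmu G) E') (wsum (gmu G) V') (wsum (gmu G) W') *
      (real p ^ nat \<bar>i - j\<bar> * (\<Prod>q\<in>gP G. real q ^ nat \<bar>gf G q - gg G q\<bar>))"
proof -
  have "(\<Prod>q\<in>insert p (gP G). real q ^ nat \<bar>((gf G)(p := i)) q - ((gg G)(p := j)) q\<bar>)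
      = real p ^ nat \<bar>i - j\<bar> * (\<Prod>q\<in>gP G. real q ^ nat \<bar>((gf G)(p := i)) q - ((gg G)(p := j)) q\<bar>)"
    using assms by (simp add: prod.insert)
  also have "(\<Prod>q\<in>gP G. real q ^ nat \<bar>((gf G)(p := i)) q - ((gg G)(p := j)) q\<bar>)
      = (\<Prod>q\<in>gP G. real q ^ nat \<bar>gf G q - gg G q\<bar>)"
    using assms by (intro prod.cong) auto
  finally show ?thesis unfolding quality_def mu_theta_Mf by simp
qed

lemma quality_base: "quality \<theta> G = Mf \<theta> (esum (gmu G) (gE G)) (wsum (gmu G) (gV G)) (wsum (gmu G) (gW G)) *
      (\<Prod>q\<in>gP G. real q ^ nat \<bar>gf G q - gg G q\<bar>)"
  unfolding quality_def mu_theta_Mf ..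

lemma C6_big:
  assumes "0 < \<tau>" "\<tau> < 1/100" "M \<ge> 2"
  shows "C6 \<tau> M \<ge> 10^20"
proof -
  have c1: "C1 \<tau> \<ge> 10^6" unfolding C1_def using assms by (simp add: field_simps)
  have "C1 \<tau> ^ 3 \<ge> (10^6)^3" using c1 by (intro power_mono) auto
  hence c13: "C1 \<tau> ^ 3 \<ge> 10^18" by simp
  have "C2 \<tau> M \<ge> 10 * 2 * 10^18" unfolding C2_def using c13 assms
    by (intro mult_mono) auto
  hence c2: "C2 \<tau> M \<ge> 10^19" by simp
  have "10^4 * M * C2 \<tau> M \<ge> 10^4 * 2 * 10^19" using c2 assms by (intro mult_mono) auto
  hence "10^4 * M * C2 \<tau> M \<ge> 10^20" by simp
  thus ?thesis unfolding C6_def by simp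
qed

lemma wsum_nonneg: "\<forall>t\<in>T. \<mu> (of_rat t) > 0 \<Longrightarrow> wsum \<mu> T \<ge> 0"
  unfolding wsum_def by (intro sum_nonneg) (auto intro: less_imp_le)

lemma wsum_pos: "finite T \<Longrightarrow> T \<noteq> {} \<Longrightarrow> \<forall>t\<in>T. \<mu> (of_rat t) > 0 \<Longrightarrow> wsum \<mu> T > 0"
  unfolding wsum_def by (intro sum_pos) auto

lemma esum_nonneg: "\<forall>(v,w)\<in>E. \<mu> (of_rat v) > 0 \<and> \<mu> (of_rat w) > 0 \<Longrightarrow> esum \<mu> E \<ge> 0"
  unfolding esum_def by (intro sum_nonneg) (auto intro!: mult_nonneg_nonneg less_imp_le)

lemma esum_pos_nonempty: "esum \<mu> E > 0 \<Longrightarrow> E \<noteq> {}"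
  unfolding esum_def by auto

lemma esum_pos: "finite E \<Longrightarrow> E \<noteq> {} \<Longrightarrow> \<forall>(v,w)\<in>E. \<mu> (of_rat v) > 0 \<and> \<mu> (of_rat w) > 0 \<Longrightarrow> esum \<mu> E > 0"
  unfolding esum_def by (intro sum_pos) auto

theorem proposition7p16:
  fixes \<tau> M :: real and G :: gcd_graph
  assumes "0 < \<tau>" and "\<tau> < 1/100" and "M \<ge> 2"
    and "is_gcd_graph G" and "nontrivial G" and "structured G"
    and "\<forall>p\<in>RG G. real p > C6 \<tau> M"
    and "RGminus G \<noteq> {}"
  shows "\<exists>G'. numerator_exact G' G \<and>
      nontrivial G' \<and> maximal (2 + \<tau>) G' \<and>
      gP G \<subset> gP G' \<and> gP G' \<subseteq> gP G \<union> RGminus G \<and>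
      RGminus G' \<subset> RGminus G \<and> RGplus G' \<subseteq> RGplus G \<and>
      (\<forall>p\<in>gP G' - gP G. gf G' p \<le> 0 \<and> gg G' p \<le> 0) \<and>
      quality (2 + \<tau>) G' \<ge> quality (2 + \<tau>) G *
        (\<Prod>p\<in>gP G' - gP G.
           (1 - (if gf G' p = gg G' p \<and> gg G' p < 0 then 1 else 0) / real p)^2 *
           (1 - 1 / real p powr (1 + \<tau>/4)))"
proof -
  have tau: "0 < \<tau>" "\<tau> < 1/100" using assms by auto
  obtain p where pR: "p \<in> RGminus G" using assms(8) by blast
  have pRG: "p \<in> RG G" using pR by (simp add: RGminus_def)
  hence pprime: "prime p" and pnot: "p \<notin> gP G" by (auto simp: RG_def)
  have pall: "\<forall>(v,w)\<in>gE G. ep p v \<le> 0 \<and> ep p w \<le> 0" using pR by (simp add: RGminus_def)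
  have wbg: "is_wbg (gmu G) (gV G) (gW G) (gE G)" using assms(4) by (simp add: is_gcd_graph_def)
  have posV: "\<forall>v\<in>gV G. v > 0" "\<forall>w\<in>gW G. w > 0" "gE G \<subseteq> gV G \<times> gW G"
    and finVW: "finite (gV G)" "finite (gW G)" and mupos: "\<forall>x>0. gmu G x > 0"
    using wbg by (auto simp: is_wbg_def)
  have finP: "finite (gP G)" using assms(4) by (simp add: is_gcd_graph_def)
  have finE: "finite (gE G)" using posV(3) finVW by (meson finite_SigmaI finite_subset)
  obtain k where k: "\<forall>(v,w)\<in>gE G. (ep p v - k, ep p w - k) \<in> {(-1,0), (0,-1), (0,0), (0,1), (1,0)}"
    using assms(6) pRG unfolding structured_def by blast
  obtain v0 w0 where vw0: "(v0,w0) \<in> gE G" "int p dvd gcd (rnum v0) (rnum w0) * gcd (rden v0) (rden w0)"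
    using pRG unfolding RG_def by auto
  have "ep p v0 \<le> -1 \<and> ep p w0 \<le> -1"
    by (rule witness_neg[OF pprime _ _ vw0(2)]) (use vw0 posV pall in auto)
  hence kneg: "k \<le> -1" using k vw0(1) by fastforce
  define V where "V = gV G"
  define W where "W = gW G"
  define E where "E = gE G"
  define \<mu> where "\<mu> = gmu G"
  define V1 where "V1 = {v\<in>V. ep p v \<le> k}"
  define V3 where "V3 = {v\<in>V. ep p v = k+1}"
  define W1 where "W1 = {w\<in>W. ep p w \<le> k}"
  define W2 where "W2 = {w\<in>W. ep p w = k+1}"
  define E1 where "E1 = {(v,w)\<in>E. ep p v \<le> k \<and> ep p w \<le> k}"
  define E2 where "E2 = {(v,w)\<in>E. ep p v \<le> k \<and> ep p w = k+1}"
  define E3 where "E3 = {(v,w)\<in>E. ep p v = k+1 \<and> ep p w \<le> k}"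
  have Ecov: "E = E1 \<union> E2 \<union> E3"
    unfolding E1_def E2_def E3_def E_def using k by fastforce
  have Edisj: "E1 \<inter> E2 = {}" "(E1 \<union> E2) \<inter> E3 = {}"
    unfolding E1_def E2_def E3_def by auto
  have E1max: "\<forall>(v,w)\<in>E1. max (ep p v) (ep p w) = max k k"
    unfolding E1_def E_def using k by fastforce
  have E2max: "\<forall>(v,w)\<in>E2. max (ep p v) (ep p w) = max k (k+1)"
    unfolding E2_def by auto
  have E3max: "\<forall>(v,w)\<in>E3. max (ep p v) (ep p w) = max (k+1) k"
    unfolding E3_def by auto
  have Esub: "E1 \<subseteq> gE G" "E2 \<subseteq> gE G" "E3 \<subseteq> gE G" using Ecov E_def by auto
  have E1s: "E1 \<subseteq> V1 \<times> W1" unfolding E1_def V1_def W1_def E_def V_def W_def using posV(3) by auto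
  have E2s: "E2 \<subseteq> V1 \<times> W2" unfolding E2_def V1_def W2_def E_def V_def W_def using posV(3) by auto
  have E3s: "E3 \<subseteq> V3 \<times> W1" unfolding E3_def V3_def W1_def E_def V_def W_def using posV(3) by auto
  have Vs: "V1 \<subseteq> gV G" "V3 \<subseteq> gV G" "W1 \<subseteq> gW G" "W2 \<subseteq> gW G"
    unfolding V1_def V3_def W1_def W2_def V_def W_def by auto
  define Gc1 where "Gc1 = G\<lparr>gV := V1, gW := W1, gE := E1, gP := insert p (gP G),
            gf := (gf G)(p := k), gg := (gg G)(p := k)\<rparr>"
  define Gc2 where "Gc2 = G\<lparr>gV := V1, gW := W2, gE := E2, gP := insert p (gP G),
            gf := (gf G)(p := k), gg := (gg G)(p := k+1)\<rparr>"
  define Gc3 where "Gc3 = G\<lparr>gV := V3, gW := W1, gE := E3, gP := insert p (gP G),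
            gf := (gf G)(p := k+1), gg := (gg G)(p := k)\<rparr>"
  have g1: "is_gcd_graph Gc1" unfolding Gc1_def
    by (rule gcd_ext[OF assms(4) pprime pnot]) 
       (use Vs Esub E1s kneg E1max in \<open>auto simp: V1_def W1_def\<close>)
  have g2: "is_gcd_graph Gc2" unfolding Gc2_def
    by (rule gcd_ext[OF assms(4) pprime pnot]) 
       (use Vs Esub E2s kneg E2max in \<open>auto simp: V1_def W2_def\<close>)
  have g3: "is_gcd_graph Gc3" unfolding Gc3_def
    by (rule gcd_ext[OF assms(4) pprime pnot]) 
       (use Vs Esub E3s kneg E3max in \<open>auto simp: V3_def W1_def\<close>)
  have muV: "\<forall>v\<in>gV G. gmu G (of_rat v) > 0" "\<forall>w\<in>gW G. gmu G (of_rat w) > 0"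
    using posV mupos by auto
  have muE: "\<forall>(v,w)\<in>E'. gmu G (of_rat v) > 0 \<and> gmu G (of_rat w) > 0" if "E' \<subseteq> gE G" for E'
    using that posV(3) muV by fastforce
  define A where "A = wsum \<mu> V"
  define B where "B = wsum \<mu> W"
  define a1 where "a1 = wsum \<mu> V1"
  define X where "X = wsum \<mu> V3"
  define b1 where "b1 = wsum \<mu> W1"
  define Y where "Y = wsum \<mu> W2"
  define e1 where "e1 = esum \<mu> E1"
  define e2 where "e2 = esum \<mu> E2"
  define e3 where "e3 = esum \<mu> E3"
  have finsets: "finite V1" "finite V3" "finite W1" "finite W2" "finite E1" "finite E2" "finite E3"
    using Vs Esub finVW finE by (auto intro: finite_subset)
  have Enon: "E \<noteq> {}" using assms(5) by (simp add: nontrivial_def E_def)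
  have Vnon: "V \<noteq> {}" "W \<noteq> {}" using Enon posV(3) unfolding E_def V_def W_def by auto
  have AB: "A > 0" "B > 0" unfolding A_def B_def \<mu>_def V_def W_def
    using wsum_pos finVW Vnon muV unfolding V_def W_def by auto
  have nn: "a1 \<ge> 0" "X \<ge> 0" "b1 \<ge> 0" "Y \<ge> 0"
    unfolding a1_def X_def b1_def Y_def \<mu>_def using wsum_nonneg muV Vs by (meson subsetD)+
  have sA: "a1 + X \<le> A"
  proof -
    have "a1 + X = wsum \<mu> (V1 \<union> V3)" unfolding a1_def X_def wsum_def
      by (rule sum.union_disjoint[symmetric]) (use finsets in \<open>auto simp: V1_def V3_def\<close>)
    also have "\<dots> \<le> wsum \<mu> V" unfolding wsum_def
      by (rule sum_mono2) (use finVW Vs muV in \<open>auto simp: V_def \<mu>_def intro: less_imp_le\<close>)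
    finally show ?thesis by (simp add: A_def)
  qed
  have sB: "b1 + Y \<le> B"
  proof -
    have "b1 + Y = wsum \<mu> (W1 \<union> W2)" unfolding b1_def Y_def wsum_def
      by (rule sum.union_disjoint[symmetric]) (use finsets in \<open>auto simp: W1_def W2_def\<close>)
    also have "\<dots> \<le> wsum \<mu> W" unfolding wsum_def
      by (rule sum_mono2) (use finVW Vs muV in \<open>auto simp: W_def \<mu>_def intro: less_imp_le\<close>)
    finally show ?thesis by (simp add: B_def)
  qed
  have en: "e1 \<ge> 0" "e2 \<ge> 0" "e3 \<ge> 0"
    unfolding e1_def e2_def e3_def \<mu>_def
    by (rule esum_nonneg[OF muE[OF Esub(1)]], rule esum_nonneg[OF muE[OF Esub(2)]],
        rule esum_nonneg[OF muE[OF Esub(3)]])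
  have esplit: "esum \<mu> E = e1 + e2 + e3"
  proof -
    have "esum \<mu> E = esum \<mu> (E1 \<union> E2) + esum \<mu> E3" unfolding Ecov esum_def
      by (rule sum.union_disjoint) (use finsets Edisj in auto)
    also have "esum \<mu> (E1 \<union> E2) = e1 + e2" unfolding e1_def e2_def esum_def
      by (rule sum.union_disjoint) (use finsets Edisj in auto)
    finally show ?thesis by (simp add: e3_def)
  qed
  have "esum (gmu G) (gE G) > 0"
    by (rule esum_pos[OF finE]) (use Enon muE[of "gE G"] in \<open>auto simp: E_def\<close>)
  hence epos: "e1 + e2 + e3 > 0" using esplit by (simp add: E_def \<mu>_def)
  have muS: "\<forall>t\<in>V1. \<mu> (of_rat t) > 0" "\<forall>t\<in>V3. \<mu> (of_rat t) > 0"
     "\<forall>t\<in>W1. \<mu> (of_rat t) > 0" "\<forall>t\<in>W2. \<mu> (of_rat t) > 0"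
    using Vs muV unfolding \<mu>_def by blast+
  have h1: "a1 > 0 \<and> b1 > 0" if "e1 > 0"
  proof -
    have "E1 \<noteq> {}" using esum_pos_nonempty[of \<mu> E1] that unfolding e1_def by simp
    then obtain v w where "(v,w) \<in> E1" by auto
    hence "v \<in> V1" "w \<in> W1" using E1s by auto
    hence "V1 \<noteq> {}" "W1 \<noteq> {}" by auto
    hence "wsum \<mu> V1 > 0" "wsum \<mu> W1 > 0"
      using wsum_pos[of V1 \<mu>] wsum_pos[of W1 \<mu>] finsets muS by auto
    thus ?thesis unfolding a1_def b1_def by simp
  qed
  have h2: "a1 > 0 \<and> Y > 0" if "e2 > 0"
  proof -
    have "E2 \<noteq> {}" using esum_pos_nonempty[of \<mu> E2] that unfolding e2_def by simp
    then obtain v w where "(v,w) \<in> E2" by auto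
    hence "v \<in> V1" "w \<in> W2" using E2s by auto
    hence "V1 \<noteq> {}" "W2 \<noteq> {}" by auto
    hence "wsum \<mu> V1 > 0" "wsum \<mu> W2 > 0"
      using wsum_pos[of V1 \<mu>] wsum_pos[of W2 \<mu>] finsets muS by auto
    thus ?thesis unfolding a1_def Y_def by simp
  qed
  have h3: "X > 0 \<and> b1 > 0" if "e3 > 0"
  proof -
    have "E3 \<noteq> {}" using esum_pos_nonempty[of \<mu> E3] that unfolding e3_def by simp
    then obtain v w where "(v,w) \<in> E3" by auto
    hence "v \<in> V3" "w \<in> W1" using E3s by auto
    hence "V3 \<noteq> {}" "W1 \<noteq> {}" by auto
    hence "wsum \<mu> V3 > 0" "wsum \<mu> W1 > 0"
      using wsum_pos[of V3 \<mu>] wsum_pos[of W1 \<mu>] finsets muS by auto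
    thus ?thesis unfolding X_def b1_def by simp
  qed
  have Pbig: "real p \<ge> 10^20" using assms(7) pRG C6_big[OF tau assms(3)] by force
  have br: "real p * Mf (2+\<tau>) e2 a1 Y \<ge> (1 - 1 / real p powr (1+\<tau>/4)) * Mf (2+\<tau>) (e1+e2+e3) A B
       \<or> real p * Mf (2+\<tau>) e3 X b1 \<ge> (1 - 1 / real p powr (1+\<tau>/4)) * Mf (2+\<tau>) (e1+e2+e3) A B
       \<or> Mf (2+\<tau>) e1 a1 b1 \<ge> (1 - 1/real p)^2 * (1 - 1 / real p powr (1+\<tau>/4)) * Mf (2+\<tau>) (e1+e2+e3) A B"
    by (rule bridge[OF tau Pbig AB nn sA sB en epos]) (use h1 h2 h3 in blast)+
  define PP where "PP = (\<Prod>q\<in>gP G. real q ^ nat \<bar>gf G q - gg G q\<bar>)"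
  have PP0: "PP > 0" unfolding PP_def using assms(4)
    by (intro prod_pos) (auto simp: is_gcd_graph_def prime_gt_0_nat)
  define r where "r = 1 / real p powr (1 + \<tau>/4)"
  define mG where "mG = Mf (2+\<tau>) (e1+e2+e3) A B"
  have mG0: "mG > 0" unfolding mG_def using Mf_eq[of "e1+e2+e3" A B] epos AB by simp
  have qG: "quality (2+\<tau>) G = mG * PP"
    unfolding quality_base mG_def PP_def using esplit by (simp add: A_def B_def E_def V_def W_def \<mu>_def)
  have qG1: "quality (2+\<tau>) Gc1 = Mf (2+\<tau>) e1 a1 b1 * PP"
    unfolding Gc1_def quality_ext[OF finP pnot] PP_def by (simp add: e1_def a1_def b1_def \<mu>_def)
  have qG2: "quality (2+\<tau>) Gc2 = Mf (2+\<tau>) e2 a1 Y * (real p * PP)"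
    unfolding Gc2_def quality_ext[OF finP pnot] PP_def by (simp add: e2_def a1_def Y_def \<mu>_def)
  have qG3: "quality (2+\<tau>) Gc3 = Mf (2+\<tau>) e3 X b1 * (real p * PP)"
    unfolding Gc3_def quality_ext[OF finP pnot] PP_def by (simp add: e3_def X_def b1_def \<mu>_def)
  have p1: "real p > 1" using Pbig by simp
  have r1: "0 < r" "r < 1"
  proof -
    have "r \<le> 1 / real p" using consts_r[OF tau Pbig] unfolding r_def by simp
    also have "\<dots> < 1" using p1 by simp
    finally show "r < 1" .
    show "0 < r" using consts_r[OF tau Pbig] unfolding r_def by simp
  qed
  have vn1: "\<forall>v\<in>V1. ep p v \<le> 0" "\<forall>w\<in>W1. ep p w \<le> 0" "\<forall>v\<in>V3. ep p v \<le> 0"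
     "\<forall>w\<in>W2. ep p w \<le> 0"
    using kneg by (auto simp: V1_def W1_def V3_def W2_def)
  from br show ?thesis
  proof (elim disjE)
    assume c2: "(1 - 1 / real p powr (1 + \<tau>/4)) * Mf (2+\<tau>) (e1+e2+e3) A B \<le> real p * Mf (2+\<tau>) e2 a1 Y"
    have "quality (2+\<tau>) G * ((1 - 0 / real p)^2 * (1 - r)) = ((1 - r) * mG) * PP"
      using qG by simp
    also have "\<dots> \<le> (real p * Mf (2+\<tau>) e2 a1 Y) * PP"
      using c2 PP0 unfolding r_def mG_def by (intro mult_right_mono) auto
    also have "\<dots> = quality (2+\<tau>) Gc2" using qG2 by simp
    finally have q: "quality (2+\<tau>) G * ((1 - 0 / real p)^2 * (1 - r)) \<le> quality (2+\<tau>) Gc2" .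
    have qp: "quality (2+\<tau>) G * ((1 - 0 / real p)^2 * (1 - r)) > 0"
      using qG mG0 PP0 r1 by simp
    show ?thesis
      by (rule finish[OF assms(4) assms(6) pR Gc2_def g2 Esub(2) Vs(1) Vs(4)])
         (use kneg vn1 q qp in \<open>simp_all add: r_def\<close>)
  next
    assume c3: "(1 - 1 / real p powr (1 + \<tau>/4)) * Mf (2+\<tau>) (e1+e2+e3) A B \<le> real p * Mf (2+\<tau>) e3 X b1"
    have "quality (2+\<tau>) G * ((1 - 0 / real p)^2 * (1 - r)) = ((1 - r) * mG) * PP"
      using qG by simp
    also have "\<dots> \<le> (real p * Mf (2+\<tau>) e3 X b1) * PP"
      using c3 PP0 unfolding r_def mG_def by (intro mult_right_mono) auto
    also have "\<dots> = quality (2+\<tau>) Gc3" using qG3 by simp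
    finally have q: "quality (2+\<tau>) G * ((1 - 0 / real p)^2 * (1 - r)) \<le> quality (2+\<tau>) Gc3" .
    have qp: "quality (2+\<tau>) G * ((1 - 0 / real p)^2 * (1 - r)) > 0"
      using qG mG0 PP0 r1 by simp
    show ?thesis
      by (rule finish[OF assms(4) assms(6) pR Gc3_def g3 Esub(3) Vs(2) Vs(3)])
         (use kneg vn1 q qp in \<open>simp_all add: r_def\<close>)
  next
    assume c1: "(1 - 1 / real p)^2 * (1 - 1 / real p powr (1 + \<tau>/4)) * Mf (2+\<tau>) (e1+e2+e3) A B \<le> Mf (2+\<tau>) e1 a1 b1"
    have "quality (2+\<tau>) G * ((1 - 1 / real p)^2 * (1 - r)) = ((1 - 1 / real p)^2 * (1 - r) * mG) * PP"
      using qG by simp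
    also have "\<dots> \<le> Mf (2+\<tau>) e1 a1 b1 * PP"
      using c1 PP0 unfolding r_def mG_def by (intro mult_right_mono) auto
    also have "\<dots> = quality (2+\<tau>) Gc1" using qG1 by simp
    finally have q: "quality (2+\<tau>) G * ((1 - 1 / real p)^2 * (1 - r)) \<le> quality (2+\<tau>) Gc1" .
    have "(1 - 1 / real p) > 0" using p1 by simp
    hence "(1 - 1 / real p)^2 > 0" by (rule zero_less_power)
    hence qp: "quality (2+\<tau>) G * ((1 - 1 / real p)^2 * (1 - r)) > 0"
      using qG mG0 PP0 r1 by (simp add: mult_pos_pos)
    show ?thesis
      by (rule finish[OF assms(4) assms(6) pR Gc1_def g1 Esub(1) Vs(1) Vs(3)])
         (use kneg vn1 q qp in \<open>simp_all add: r_def\<close>)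
  qed
qed

end
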